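(* Let $r(n)$ be defined by $\sum_{n\ge0}r(n)q^n=\frac{(q^2;q^2)_\infty^2}{(q;q)_\infty^5}=\frac{(-q;q)_\infty^2}{(q;q)_\infty^3}$ (the number of three-colored overpartitions of $n$ with no overlined parts of the third color). Then for every $n\ge0$, $$r(n)=\sum_{\substack{c\in\mathcal C_{P_5}\\ |c|=n}}\ \prod_{j\in\mathbb Z\setminus\{0\}}(6j-1)^{m_{j(3j-1)/2}(c)},$$ where $P_5=\{j(3j-1)/2: j\in\mathbb Z\setminus\{0\}\}$.
   Context: $(a;q)_\infty:=\prod_{i\ge0}(1-aq^i)$. A composition is an ordered finite sequence of positive integers (including the empty one); $|c|$ is the sum of parts; $m_i(c)$ is the number of parts equal to $i$; $\mathcal C_T$ is the set of compositions with all parts in $T$. *)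

theory Defs
  imports "HOL-Computational_Algebra.Formal_Power_Series"
begin

definition qpoch_inf :: "'a::field fps \<Rightarrow> 'a fps \<Rightarrow> 'a fps" where
  "qpoch_inf a q = lim (\<lambda>N. \<Prod>i<N. 1 - a * q ^ i)"

definition r_gf :: "rat fps" where
  "r_gf = qpoch_inf (fps_X ^ 2) (fps_X ^ 2) ^ 2 / qpoch_inf fps_X fps_X ^ 5"

definition r :: "nat \<Rightarrow> rat" where
  "r n = fps_nth r_gf n"

definition pent :: "int \<Rightarrow> int" where
  "pent j = j * (3 * j - 1) div 2"

definition P5 :: "nat set" where
  "P5 = {nat (pent j) | j. j \<noteq> 0}"

definition compositions :: "nat set \<Rightarrow> nat \<Rightarrow> nat list set" where
  "compositions T n = {c. (\<forall>x\<in>set c. 0 < x) \<and> set c \<subseteq> T \<and> sum_list c = n}"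

end

theory Submission
  imports Defs
begin

unbundle fps_syntax

definition agree :: "nat \<Rightarrow> 'a::zero fps \<Rightarrow> 'a fps \<Rightarrow> bool" where
  "agree n f g \<longleftrightarrow> (\<forall>i\<le>n. f$i = g$i)"

lemma agree_refl[simp]: "agree n f f" by (simp add: agree_def)
lemma agree_sym: "agree n f g \<Longrightarrow> agree n g f" by (simp add: agree_def)
lemma agree_trans: "agree n f g \<Longrightarrow> agree n g h \<Longrightarrow> agree n f h" by (simp add: agree_def)
lemma agree_mono: "agree n f g \<Longrightarrow> m \<le> n \<Longrightarrow> agree m f g" by (simp add: agree_def)
lemma agree_add: "agree n f f' \<Longrightarrow> agree n g g' \<Longrightarrow> agree n (f+g) (f'+g')"
  by (simp add: agree_def)
lemma agree_diff: "agree n (f::'a::ab_group_add fps) f' \<Longrightarrow> agree n g g' \<Longrightarrow> agree n (f-g) (f'-g')"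
  by (simp add: agree_def)
lemma agree_mult: "agree n (f::'a::comm_ring_1 fps) f' \<Longrightarrow> agree n g g' \<Longrightarrow> agree n (f*g) (f'*g')"
  by (simp add: agree_def fps_mult_nth)
lemma agree_sum: "(\<And>x. x \<in> A \<Longrightarrow> agree n (f x) (g x)) \<Longrightarrow> agree n (sum f A) (sum g A)"
  by (induction A rule: infinite_finite_induct) (auto intro: agree_add)
lemma agree_prod: "(\<And>x. x \<in> A \<Longrightarrow> agree n (f x :: 'a::comm_ring_1 fps) (g x)) \<Longrightarrow> agree n (prod f A) (prod g A)"
  by (induction A rule: infinite_finite_induct) (auto intro: agree_mult)
lemma agree_eq: "(\<And>n. agree n f g) \<Longrightarrow> f = g"
  by (auto simp: agree_def fps_eq_iff)

lemma agree_cancel: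
  fixes f g P :: "'a::comm_ring_1 fps"
  assumes "agree n (f*P) (g*P)" "P$0 = 1"
  shows "agree n f g"
proof -
  have "\<forall>i\<le>m. f$i = g$i" if "m \<le> n" for m
    using that
  proof (induction m)
    case 0
    with assms show ?case by (auto simp: agree_def fps_mult_nth)
  next
    case (Suc m)
    have IH: "\<forall>i\<le>m. f$i = g$i" using Suc by auto
    have "(f*P)$(Suc m) = (g*P)$(Suc m)" using assms Suc.prems by (auto simp: agree_def)
    hence "(\<Sum>i=0..Suc m. f$i * P$(Suc m - i)) = (\<Sum>i=0..Suc m. g$i * P$(Suc m - i))"
      by (simp add: fps_mult_nth)
    hence "(\<Sum>i=0..m. f$i * P$(Suc m - i)) + f$(Suc m) * P$0 =
           (\<Sum>i=0..m. g$i * P$(Suc m - i)) + g$(Suc m) * P$0" by simp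
    moreover have "(\<Sum>i=0..m. f$i * P$(Suc m - i)) = (\<Sum>i=0..m. g$i * P$(Suc m - i))"
      using IH by (intro sum.cong) auto
    ultimately have "f$(Suc m) = g$(Suc m)" using assms(2) by simp
    with IH show ?case using le_Suc_eq by auto
  qed
  thus ?thesis by (simp add: agree_def)
qed

lemma pow_low_zero:
  fixes Q f :: "'a::comm_ring_1 fps"
  assumes "Q$0 = 0" "j < i"
  shows "(Q^i * f) $ j = 0"
  using assms(2)
proof (induction i arbitrary: j)
  case 0 then show ?case by simp
next
  case (Suc i)
  have "(Q^Suc i * f) $ j = (Q * (Q^i*f)) $ j" by (simp add: mult.assoc)
  also have "\<dots> = (\<Sum>k=0..j. Q$k * (Q^i*f)$(j-k))" by (simp add: fps_mult_nth)
  also have "\<dots> = 0"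
  proof (intro sum.neutral ballI)
    fix k assume "k \<in> {0..j}"
    show "Q$k * (Q^i*f)$(j-k) = 0"
    proof (cases "k = 0")
      case True then show ?thesis using assms by simp
    next
      case False
      hence "j - k < i" using Suc.prems \<open>k \<in> {0..j}\<close> by auto
      then show ?thesis using Suc.IH[of "j-k"] by simp
    qed
  qed
  finally show ?case .
qed

lemma agree_pow_zero: "(Q::'a::comm_ring_1 fps)$0 = 0 \<Longrightarrow> n < i \<Longrightarrow> agree n (Q^i * f) 0"
  by (auto simp: agree_def intro!: pow_low_zero)

definition pp :: "'a::comm_ring_1 fps \<Rightarrow> 'a fps \<Rightarrow> nat \<Rightarrow> 'a fps" where
  "pp c Q N = (\<Prod>i<N. 1 - c * Q^i)"

definition Pinf :: "'a::comm_ring_1 fps \<Rightarrow> 'a fps \<Rightarrow> 'a fps" where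
  "Pinf c Q = Abs_fps (\<lambda>n. pp c Q (Suc n) $ n)"

lemma pp_agree_Suc:
  assumes "Q$0 = 0" "n < N"
  shows "agree n (pp c Q N) (pp c Q (Suc N))"
proof -
  have "agree n (1 - c * Q^N) 1"
    using agree_pow_zero[OF assms(1,2), of c] by (simp add: agree_def mult.commute)
  hence "agree n (pp c Q N * 1) (pp c Q N * (1 - c*Q^N))"
    by (intro agree_mult) (auto intro: agree_sym)
  thus ?thesis by (simp add: pp_def)
qed

lemma pp_agree:
  assumes "Q$0 = 0" "n < N" "N \<le> M"
  shows "agree n (pp c Q N) (pp c Q M)"
  using assms(3)
proof (induction M rule: dec_induct)
  case (step m)
  then show ?case using pp_agree_Suc[OF assms(1), of n m c] assms(2) by (auto intro: agree_trans)
qed simp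

lemma Pinf_agree:
  assumes "Q$0 = 0" "n < N"
  shows "agree n (pp c Q N) (Pinf c Q)"
  unfolding agree_def
proof safe
  fix i assume "i \<le> n"
  have "agree i (pp c Q (Suc i)) (pp c Q N)"
    using pp_agree[OF assms(1), of i "Suc i" N] \<open>i\<le>n\<close> assms(2) by auto
  thus "pp c Q N $ i = Pinf c Q $ i" by (simp add: agree_def Pinf_def)
qed

lemma Pinf_0: "Q$0 = 0 \<Longrightarrow> c$0 = 0 \<Longrightarrow> Pinf c Q $ 0 = 1"
  using Pinf_agree[of Q 0 1 c] by (simp add: agree_def pp_def)

lemma Pinf_0': "Q$0 = 0 \<Longrightarrow> Pinf Q Q $ 0 = 1"
  using Pinf_agree[of Q 0 1 Q] by (simp add: agree_def pp_def)


definition msum :: "'b set \<Rightarrow> ('b \<Rightarrow> 'a::comm_monoid_add) \<Rightarrow> ('b \<Rightarrow> nat) \<Rightarrow> 'a fps" where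
  "msum A c e = Abs_fps (\<lambda>n. \<Sum>x\<in>{x\<in>A. e x = n}. c x)"

definition ffib :: "'b set \<Rightarrow> ('b \<Rightarrow> nat) \<Rightarrow> bool" where
  "ffib A e \<longleftrightarrow> (\<forall>n. finite {x\<in>A. e x = n})"

lemma msum_nth: "msum A c e $ n = (\<Sum>x\<in>{x\<in>A. e x = n}. c x)"
  by (simp add: msum_def)

lemma msum_cong: "(\<And>x. x\<in>A \<Longrightarrow> c x = c' x) \<Longrightarrow> (\<And>x. x\<in>A \<Longrightarrow> e x = e' x) \<Longrightarrow> msum A c e = msum A c' e'"
proof -
  assume a: "\<And>x. x\<in>A \<Longrightarrow> c x = c' x" "\<And>x. x\<in>A \<Longrightarrow> e x = e' x"
  have "{x\<in>A. e x = n} = {x\<in>A. e' x = n}" for n using a(2) by auto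
  thus ?thesis unfolding msum_def using a(1) by (auto intro!: sum.cong)
qed

lemma msum_reindex:
  assumes "bij_betw \<phi> A B"
  shows "msum B c e = msum A (c \<circ> \<phi>) (e \<circ> \<phi>)"
proof -
  have "(\<Sum>x\<in>{x\<in>B. e x = n}. c x) = (\<Sum>x\<in>{x\<in>A. e (\<phi> x) = n}. c (\<phi> x))" for n
  proof -
    have "bij_betw \<phi> {x\<in>A. e (\<phi> x) = n} {x\<in>B. e x = n}"
      using assms unfolding bij_betw_def inj_on_def by auto
    thus ?thesis by (rule sum.reindex_bij_betw[symmetric])
  qed
  thus ?thesis by (simp add: msum_def)
qed

lemma ffib_reindex: "bij_betw \<phi> A B \<Longrightarrow> ffib B e \<Longrightarrow> ffib A (e \<circ> \<phi>)"
proof -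
  assume b: "bij_betw \<phi> A B" and f: "ffib B e"
  have "{x\<in>A. e (\<phi> x) = n} \<subseteq> the_inv_into A \<phi> ` {x\<in>B. e x = n}" for n
    using b by (auto simp: bij_betw_def the_inv_into_f_f intro!: image_eqI)
  thus ?thesis using f unfolding ffib_def comp_def by (meson finite_imageI finite_subset)
qed

lemma ffib_subset: "ffib A e \<Longrightarrow> B \<subseteq> A \<Longrightarrow> ffib B e"
  unfolding ffib_def by (auto intro: finite_subset[of _ "{x\<in>A. e x = _}"])

lemma msum_union:
  assumes "A \<inter> B = {}" "ffib A e" "ffib B e"
  shows "msum (A \<union> B) c e = msum A c e + msum B c e"
proof -
  have "(\<Sum>x\<in>{x\<in>A\<union>B. e x = n}. c x) = (\<Sum>x\<in>{x\<in>A. e x = n}. c x) + (\<Sum>x\<in>{x\<in>B. e x = n}. c x)" for n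
  proof -
    have "{x\<in>A\<union>B. e x = n} = {x\<in>A. e x = n} \<union> {x\<in>B. e x = n}" by auto
    thus ?thesis using assms by (simp add: ffib_def sum.union_disjoint disjoint_iff)
  qed
  thus ?thesis by (simp add: msum_def fps_eq_iff)
qed

lemma msum_diff:
  "msum A (\<lambda>x. c x - d x) e = msum A c e - (msum A d e :: 'a::ab_group_add fps)"
  by (simp add: msum_def fps_eq_iff sum_subtractf)

lemma msum_uminus:
  "msum A (\<lambda>x. - c x) e = - (msum A c e :: 'a::ab_group_add fps)"
  by (simp add: msum_def fps_eq_iff sum_negf)

lemma ffib_times:
  assumes "ffib A e" "ffib B g"
  shows "ffib (A \<times> B) (\<lambda>(x,y). e x + g y)"
proof -
  have "{p\<in>A\<times>B. (\<lambda>(x,y). e x + g y) p = n} \<subseteq> (\<Union>i\<in>{0..n}. {x\<in>A. e x = i} \<times> {y\<in>B. g y = n - i})" for n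
  proof
    fix p assume p: "p \<in> {p\<in>A\<times>B. (\<lambda>(x,y). e x + g y) p = n}"
    obtain x y where xy: "p = (x,y)" by force
    have "x \<in> A" "y \<in> B" "e x + g y = n" using p xy by auto
    thus "p \<in> (\<Union>i\<in>{0..n}. {x\<in>A. e x = i} \<times> {y\<in>B. g y = n - i})"
      unfolding xy by (intro UN_I[of "e x"]) auto
  qed
  moreover have "finite (\<Union>i\<in>{0..n}. {x\<in>A. e x = i} \<times> {y\<in>B. g y = n - i})" for n
    using assms by (auto simp: ffib_def)
  ultimately show ?thesis unfolding ffib_def by (meson finite_subset)
qed

lemma msum_mult:
  fixes c d :: "'b \<Rightarrow> 'a::comm_ring_1"
  assumes "ffib A e" "ffib B g"
  shows "msum A c e * msum B d g = msum (A \<times> B) (\<lambda>(x,y). c x * d y) (\<lambda>(x,y). e x + g y)"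
proof (rule fps_ext)
  fix n
  define F where "F = {p\<in>A\<times>B. (\<lambda>(x,y). e x + g y) p = n}"
  have finF: "finite F" using ffib_times[OF assms] by (simp add: ffib_def F_def)
  have "(msum A c e * msum B d g) $ n = (\<Sum>i=0..n. (\<Sum>x\<in>{x\<in>A. e x = i}. c x) * (\<Sum>y\<in>{y\<in>B. g y = n - i}. d y))"
    by (simp add: fps_mult_nth msum_nth)
  also have "\<dots> = (\<Sum>i=0..n. \<Sum>p\<in>{x\<in>A. e x = i} \<times> {y\<in>B. g y = n - i}. (\<lambda>(x,y). c x * d y) p)"
    by (simp add: sum_product sum.cartesian_product)
  also have "\<dots> = (\<Sum>i=0..n. \<Sum>p\<in>{p\<in>F. e (fst p) = i}. (\<lambda>(x,y). c x * d y) p)"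
  proof (intro sum.cong refl)
    fix i assume "i \<in> {0..n}"
    then show "{x\<in>A. e x = i} \<times> {y\<in>B. g y = n - i} = {p\<in>F. e (fst p) = i}"
      by (auto simp: F_def)
  qed
  also have "\<dots> = (\<Sum>p\<in>F. (\<lambda>(x,y). c x * d y) p)"
    by (rule sum.group[OF finF]) (auto simp: F_def)
  also have "\<dots> = msum (A \<times> B) (\<lambda>(x,y). c x * d y) (\<lambda>(x,y). e x + g y) $ n"
    by (simp add: msum_nth F_def)
  finally show "(msum A c e * msum B d g) $ n = msum (A \<times> B) (\<lambda>(x,y). c x * d y) (\<lambda>(x,y). e x + g y) $ n" .
qed

lemma msum_invol_zero:
  fixes c :: "'b \<Rightarrow> 'a::{idom,ring_char_0}"
  assumes "ffib A e" "\<And>x. x\<in>A \<Longrightarrow> \<iota> x \<in> A" "\<And>x. x\<in>A \<Longrightarrow> \<iota> (\<iota> x) = x"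
    "\<And>x. x\<in>A \<Longrightarrow> c (\<iota> x) = - c x" "\<And>x. x\<in>A \<Longrightarrow> e (\<iota> x) = e x"
  shows "msum A c e = 0"
proof (rule fps_ext)
  fix n
  define F where "F = {x\<in>A. e x = n}"
  have bij: "bij_betw \<iota> F F"
  proof (rule bij_betw_byWitness[where f'=\<iota>])
    show "\<forall>a\<in>F. \<iota> (\<iota> a) = a" using assms(3) by (simp add: F_def)
    show "\<forall>a'\<in>F. \<iota> (\<iota> a') = a'" using assms(3) by (simp add: F_def)
    show "\<iota> ` F \<subseteq> F" using assms(2,5) by (auto simp: F_def)
    show "\<iota> ` F \<subseteq> F" using assms(2,5) by (auto simp: F_def)
  qed
  have "(\<Sum>x\<in>F. c x) = (\<Sum>x\<in>F. c (\<iota> x))"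
    using sum.reindex_bij_betw[OF bij, of c] by simp
  also have "\<dots> = (\<Sum>x\<in>F. - c x)" using assms(4) by (intro sum.cong) (auto simp: F_def)
  also have "\<dots> = - (\<Sum>x\<in>F. c x)" by (simp add: sum_negf)
  finally have "(\<Sum>x\<in>F. c x) + (\<Sum>x\<in>F. c x) = 0" by (simp add: eq_neg_iff_add_eq_0)
  hence "2 * (\<Sum>x\<in>F. c x) = 0" by (metis mult_2)
  hence "(\<Sum>x\<in>F. c x) = 0" by simp
  thus "msum A c e $ n = 0 $ n" by (simp add: msum_nth F_def)
qed

lemma sum_mono_nth:
  fixes c :: "'b \<Rightarrow> 'a::comm_ring_1"
  assumes "finite K"
  shows "(\<Sum>x\<in>K. fps_const (c x) * fps_X ^ e x) $ i = (\<Sum>x\<in>{x\<in>K. e x = i}. c x)"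
proof -
  have "(\<Sum>x\<in>K. fps_const (c x) * fps_X ^ e x) $ i = (\<Sum>x\<in>K. if e x = i then c x else 0)"
    by (simp add: fps_sum_nth) (intro sum.cong, auto)
  also have "\<dots> = (\<Sum>x\<in>{x\<in>K. e x = i}. c x)"
    using assms by (simp add: sum.If_cases Int_def)
  finally show ?thesis .
qed

lemma agree_msum_finite:
  fixes c :: "'b \<Rightarrow> 'a::comm_ring_1"
  assumes "finite K" "K \<subseteq> A" "\<And>x. x \<in> A \<Longrightarrow> e x \<le> n \<Longrightarrow> x \<in> K"
  shows "agree n (\<Sum>x\<in>K. fps_const (c x) * fps_X ^ e x) (msum A c e)"
  unfolding agree_def
proof safe
  fix i assume "i \<le> n"
  have "{x\<in>K. e x = i} = {x\<in>A. e x = i}" using assms \<open>i\<le>n\<close> by auto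
  thus "(\<Sum>x\<in>K. fps_const (c x) * fps_X ^ e x) $ i = msum A c e $ i"
    using sum_mono_nth[OF assms(1), of c e i] by (simp add: msum_nth)
qed


fun tri :: "nat \<Rightarrow> nat" where
  "tri 0 = 0" | "tri (Suc k) = tri k + k"

lemma tri_add: "tri (a + b) = tri a + tri b + a * b"
  by (induction b) (auto simp: algebra_simps)

lemma tri_2: "2 * tri k = k * (k - 1)"
proof (induction k)
  case (Suc k)
  have "2 * tri (Suc k) = k * (k - 1) + 2 * k" using Suc by simp
  also have "\<dots> = Suc k * k" by (cases k) (auto simp: algebra_simps)
  finally show ?case by simp
qed simp

fun gb :: "'a::comm_ring_1 \<Rightarrow> nat \<Rightarrow> nat \<Rightarrow> 'a" where
  "gb q n 0 = 1"
| "gb q 0 (Suc k) = 0"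
| "gb q (Suc n) (Suc k) = gb q n k + q^(Suc k) * gb q n (Suc k)"

lemma gb_zero: "n < k \<Longrightarrow> gb q n k = 0"
proof (induction n arbitrary: k)
  case 0 then show ?case by (cases k) auto
next
  case (Suc n) then show ?case by (cases k) auto
qed

lemma gb_const: "gb (fps_const q) n k = fps_const (gb q n k)"
proof (induction n arbitrary: k)
  case 0 then show ?case by (cases k) auto
next
  case (Suc n) then show ?case by (cases k) (auto simp: fps_const_add fps_const_mult fps_const_power)
qed

lemma cauchy:
  fixes q x :: "'a::comm_ring_1"
  shows "(\<Prod>i<n. 1 + x * q^i) = (\<Sum>k\<le>n. gb q n k * q^tri k * x^k)"
proof (induction n arbitrary: x)
  case 0 then show ?case by simp
next
  case (Suc n)
  define B where "B j = gb q n j * q^tri (Suc j) * x^j" for j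
  have "(\<Prod>i<Suc n. 1 + x * q^i) = (1 + x) * (\<Prod>i<n. 1 + (x*q) * q^i)"
    unfolding prod.lessThan_Suc_shift by (simp add: mult.assoc)
  also have "\<dots> = (1 + x) * (\<Sum>k\<le>n. gb q n k * q^tri k * (x*q)^k)" by (simp add: Suc)
  also have "\<dots> = (\<Sum>k\<le>n. B k) + (\<Sum>k\<le>n. gb q n k * q^tri (Suc k) * x^Suc k)"
    by (simp add: B_def distrib_right sum_distrib_left power_mult_distrib power_add algebra_simps flip: sum.distrib)
  also have "(\<Sum>k\<le>n. B k) = (\<Sum>k\<le>Suc n. B k)" by (simp add: B_def gb_zero)
  also have "\<dots> = B 0 + (\<Sum>k\<le>n. B (Suc k))" by (rule sum.atMost_Suc_shift)
  also have "\<dots> = 1 + (\<Sum>k\<le>n. q^(Suc k) * gb q n (Suc k) * q^tri (Suc k) * x^Suc k)"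
    unfolding B_def by (intro arg_cong2[where f="(+)"] sum.cong) (simp_all add: power_add mult_ac)
  finally have "(\<Prod>i<Suc n. 1 + x * q^i) = 1 + (\<Sum>k\<le>n. gb q (Suc n) (Suc k) * q^tri (Suc k) * x^Suc k)"
    by (simp add: sum.distrib algebra_simps)
  also have "\<dots> = (\<Sum>k\<le>Suc n. gb q (Suc n) k * q^tri k * x^k)"
    by (subst sum.atMost_Suc_shift) simp
  finally show ?case .
qed

definition qf :: "'a::comm_ring_1 \<Rightarrow> nat \<Rightarrow> 'a" where
  "qf q m = (\<Prod>i<m. 1 - q^Suc i)"

lemma qf_Suc: "qf q (Suc m) = qf q m * (1 - q^Suc m)"
  by (simp add: qf_def)

lemma gb_prod: "k \<le> n \<Longrightarrow> gb q n k * qf q k * qf q (n - k) = qf q n"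
proof (induction n arbitrary: k)
  case 0 then show ?case by (simp add: qf_def)
next
  case (Suc n)
  show ?case
  proof (cases k)
    case 0 then show ?thesis by (simp add: qf_def)
  next
    case (Suc j)
    with Suc.prems have jn: "j \<le> n" by simp
    have t1: "gb q n j * qf q (Suc j) * qf q (n - j) = qf q n * (1 - q^Suc j)"
    proof -
      have "gb q n j * qf q (Suc j) * qf q (n - j) = (gb q n j * qf q j * qf q (n - j)) * (1 - q^Suc j)"
        by (simp only: qf_Suc mult_ac)
      also have "\<dots> = qf q n * (1 - q^Suc j)" using Suc.IH[OF jn] by simp
      finally show ?thesis .
    qed
    have t2: "q^Suc j * gb q n (Suc j) * qf q (Suc j) * qf q (n - j) = q^Suc j * qf q n * (1 - q^(n-j))"
    proof (cases "j = n")
      case True then show ?thesis by (simp add: gb_zero)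
    next
      case False
      hence "Suc j \<le> n" using jn by simp
      moreover have "n - j = Suc (n - Suc j)" using \<open>Suc j \<le> n\<close> by simp
      ultimately have "q^Suc j * gb q n (Suc j) * qf q (Suc j) * qf q (n - j) = q^Suc j * (gb q n (Suc j) * qf q (Suc j) * qf q (n - Suc j)) * (1 - q^(n-j))"
        by (simp only: qf_Suc mult_ac)
      also have "\<dots> = q^Suc j * qf q n * (1 - q^(n-j))" using Suc.IH[OF \<open>Suc j \<le> n\<close>] by simp
      finally show ?thesis .
    qed
    have "gb q (Suc n) k * qf q k * qf q (Suc n - k)
        = gb q n j * qf q (Suc j) * qf q (n - j) + q^Suc j * gb q n (Suc j) * qf q (Suc j) * qf q (n - j)"
      by (simp add: Suc algebra_simps)
    also have "\<dots> = qf q n * (1 - q^Suc j) + q^Suc j * qf q n * (1 - q^(n-j))" using t1 t2 by simp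
    also have "\<dots> = qf q n * (1 - q^Suc n)"
    proof -
      have "q^j * q^(n-j) = q^n" using jn by (metis le_add_diff_inverse power_add)
      hence hq: "q^Suc j * q^(n-j) = q^Suc n" by (simp add: mult.assoc)
      have gen: "w*(1-r) + r*w*(1-s) = w*(1-r*s)" for w r s :: 'a by (simp add: algebra_simps)
      show ?thesis using gen[of "qf q n" "q^Suc j" "q^(n-j)"] unfolding hq .
    qed
    finally show ?thesis by (simp add: qf_Suc)
  qed
qed

lemma gb_sym:
  fixes q :: "'a::idom"
  assumes "\<And>m. qf q m \<noteq> 0" "k \<le> n"
  shows "gb q n k = gb q n (n - k)"
proof -
  have "gb q n k * (qf q k * qf q (n - k)) = gb q n (n - k) * (qf q k * qf q (n - k))"
    using gb_prod[OF assms(2), of q] gb_prod[of "n-k" n q] assms(2) by (simp add: algebra_simps)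
  moreover have "qf q k * qf q (n - k) \<noteq> 0" using assms(1) by simp
  ultimately show ?thesis by simp
qed

lemma cauchy_fps:
  fixes q c :: "'a::comm_ring_1"
  shows "(\<Prod>i<n. 1 + fps_X * fps_const (c * q^i)) = Abs_fps (\<lambda>k. gb q n k * q^tri k * c^k)"
proof -
  have "(\<Prod>i<n. 1 + fps_X * fps_const (c * q^i)) = (\<Prod>i<n. 1 + (fps_X * fps_const c) * fps_const q ^ i)"
    by (simp add: fps_const_mult fps_const_power mult.assoc)
  also have "\<dots> = (\<Sum>k\<le>n. fps_const (gb q n k * q^tri k * c^k) * fps_X^k)"
    by (subst cauchy, rule sum.cong, simp_all add: gb_const fps_const_mult fps_const_power power_mult_distrib mult_ac)
  also have "\<dots> = Abs_fps (\<lambda>k. gb q n k * q^tri k * c^k)"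
  proof (rule fps_ext)
    fix t
    have "(\<Sum>k\<le>n. fps_const (gb q n k * q^tri k * c^k) * fps_X^k) $ t = (\<Sum>k\<in>{k\<in>{..n}. k = t}. gb q n k * q^tri k * c^k)"
      using sum_mono_nth[of "{..n}" "\<lambda>k. gb q n k * q^tri k * c^k" "\<lambda>k. k" t] by simp
    also have "\<dots> = gb q n t * q^tri t * c^t"
    proof (cases "t \<le> n")
      case True
      hence "{k\<in>{..n}. k = t} = {t}" by auto
      thus ?thesis by simp
    next
      case False
      hence "{k\<in>{..n}. k = t} = {}" by auto
      thus ?thesis using False by (simp add: gb_zero)
    qed
    finally show "(\<Sum>k\<le>n. fps_const (gb q n k * q^tri k * c^k) * fps_X^k) $ t = Abs_fps (\<lambda>k. gb q n k * q^tri k * c^k) $ t" by simp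
  qed
  finally show ?thesis .
qed

lemma prod_lessThan_add: "(\<Prod>i<m+(n::nat). f i) = (\<Prod>i<m. f i) * (\<Prod>i<n. f (m+i))"
  by (induction n) (auto simp: mult.assoc)

lemma vandermonde:
  fixes q :: "'a::idom"
  assumes "q \<noteq> 0"
  shows "gb q (m+n) t = (\<Sum>u=0..t. gb q m u * gb q n (t-u) * q^((t-u)*(m-u)))"
proof -
  have "Abs_fps (\<lambda>k. gb q (m+n) k * q^tri k * 1^k)
      = Abs_fps (\<lambda>k. gb q m k * q^tri k * 1^k) * Abs_fps (\<lambda>k. gb q n k * q^tri k * (q^m)^k)"
  proof -
    have "(\<Prod>i<m+n. 1 + fps_X * fps_const (1 * q^i)) = (\<Prod>i<m. 1 + fps_X * fps_const (1 * q^i)) * (\<Prod>i<n. 1 + fps_X * fps_const (q^m * q^i))"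
      by (simp add: prod_lessThan_add power_add)
    thus ?thesis by (simp only: cauchy_fps)
  qed
  hence "gb q (m+n) t * q^tri t = (\<Sum>u=0..t. (gb q m u * q^tri u) * (gb q n (t-u) * q^tri (t-u) * (q^m)^(t-u)))"
    by (simp add: fps_eq_iff fps_mult_nth)
  also have "\<dots> = (\<Sum>u=0..t. q^tri t * (gb q m u * gb q n (t-u) * q^((t-u)*(m-u))))"
  proof (intro sum.cong refl)
    fix u assume u: "u \<in> {0..t}"
    show "gb q m u * q ^ tri u * (gb q n (t - u) * q ^ tri (t - u) * (q ^ m) ^ (t - u)) =
          q ^ tri t * (gb q m u * gb q n (t - u) * q ^ ((t - u) * (m - u)))"
    proof (cases "u \<le> m")
      case True
      obtain d where d: "t = u + d" using u by (metis atLeastAtMost_iff le_add_diff_inverse)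
      obtain e where e: "m = u + e" using True by (metis le_add_diff_inverse)
      have "tri u + tri (t-u) + m*(t-u) = tri t + (t-u)*(m-u)"
        unfolding d e using tri_add[of u d] by (simp add: algebra_simps)
      hence "q^tri u * q^tri (t-u) * (q^m)^(t-u) = q^tri t * q^((t-u)*(m-u))"
        by (simp flip: power_add power_mult)
      thus ?thesis by (simp add: algebra_simps)
    next
      case False then show ?thesis by (simp add: gb_zero)
    qed
  qed
  also have "\<dots> = q^tri t * (\<Sum>u=0..t. gb q m u * gb q n (t-u) * q^((t-u)*(m-u)))"
    by (simp add: sum_distrib_left)
  finally show ?thesis using assms by (simp add: mult.commute)
qed


definition zp :: "'a::comm_ring_1 \<Rightarrow> 'a \<Rightarrow> int \<Rightarrow> 'a" where
  "zp a b k = (if k \<ge> 0 then a ^ nat k else b ^ nat (-k))"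

definition Ej :: "nat \<Rightarrow> nat \<Rightarrow> int \<Rightarrow> nat" where
  "Ej \<alpha> \<beta> k = (if k \<ge> 0 then \<alpha> * tri (nat k + 1) + \<beta> * tri (nat k)
                 else \<alpha> * tri (nat (-k)) + \<beta> * tri (nat (-k) + 1))"

lemma tri_ge: "l - 1 \<le> tri l"
  by (induction l) auto

lemma Ej_ge: "1 \<le> \<alpha> + \<beta> \<Longrightarrow> tri (nat \<bar>k\<bar>) \<le> Ej \<alpha> \<beta> k"
proof -
  assume a: "1 \<le> \<alpha> + \<beta>"
  have m: "tri l \<le> tri (l+1)" for l by simp
  have "tri l \<le> \<alpha> * tri (l + 1) + \<beta> * tri l" for l
  proof -
    have "tri l \<le> (\<alpha> + \<beta>) * tri l" using a by simp
    also have "\<dots> \<le> \<alpha> * tri (l + 1) + \<beta> * tri l" by (simp add: algebra_simps)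
    finally show ?thesis .
  qed
  moreover have "tri l \<le> \<alpha> * tri l + \<beta> * tri (l + 1)" for l
  proof -
    have "tri l \<le> (\<alpha> + \<beta>) * tri l" using a by simp
    also have "\<dots> \<le> \<alpha> * tri l + \<beta> * tri (l+1)" by (simp add: algebra_simps)
    finally show ?thesis .
  qed
  ultimately show ?thesis by (auto simp: Ej_def)
qed

lemma Ej_big: "1 \<le> \<alpha> + \<beta> \<Longrightarrow> Ej \<alpha> \<beta> k \<le> n \<Longrightarrow> \<bar>k\<bar> \<le> int n + 1"
proof -
  assume a: "1 \<le> \<alpha> + \<beta>" "Ej \<alpha> \<beta> k \<le> n"
  have "nat \<bar>k\<bar> - 1 \<le> n" using tri_ge[of "nat \<bar>k\<bar>"] Ej_ge[OF a(1), of k] a(2) by linarith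
  thus ?thesis by linarith
qed

lemma ffib_Ej: "1 \<le> \<alpha> + \<beta> \<Longrightarrow> ffib A (Ej \<alpha> \<beta>)"
proof -
  assume a: "1 \<le> \<alpha> + \<beta>"
  have "{k\<in>A. Ej \<alpha> \<beta> k = n} \<subseteq> {-(int n + 1)..int n + 1}" for n
  proof
    fix k assume "k \<in> {k\<in>A. Ej \<alpha> \<beta> k = n}"
    hence "\<bar>k\<bar> \<le> int n + 1" using Ej_big[OF a, of k n] by simp
    thus "k \<in> {-(int n + 1)..int n + 1}" by (simp add: abs_le_iff)
  qed
  thus ?thesis unfolding ffib_def by (meson finite_atLeastAtMost_int finite_subset)
qed

lemma zp_mult:
  assumes "a * b = 1"
  shows "a ^ rr * b ^ s = zp a b (int rr - int s)"
proof (cases "s \<le> rr")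
  case True
  then obtain m where "rr = s + m" by (metis le_add_diff_inverse)
  hence "a ^ rr * b ^ s = a ^ m * (a*b)^s" by (simp add: power_add power_mult_distrib mult_ac)
  thus ?thesis using assms \<open>rr = s + m\<close> by (simp add: zp_def)
next
  case False
  then obtain m where m: "s = rr + m" "m > 0" by (metis less_imp_add_positive not_le)
  hence "a ^ rr * b ^ s = b ^ m * (a*b)^rr" by (simp add: power_add power_mult_distrib mult_ac)
  thus ?thesis using assms m by (simp add: zp_def)
qed

lemma Ej_mult:
  "(\<alpha> + \<beta>) * (tri rr + tri s) + \<alpha> * rr + \<beta> * s = (\<alpha> + \<beta>) * (rr * s) + Ej \<alpha> \<beta> (int rr - int s)"
proof (cases "s \<le> rr")
  case True
  then obtain m where m: "rr = s + m" by (metis le_add_diff_inverse)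
  have t2: "2 * tri s + s = s * s" using tri_2[of s] by (cases s) auto
  have "(\<alpha> + \<beta>) * (tri rr + tri s) + \<alpha> * rr + \<beta> * s
      = (\<alpha> + \<beta>) * (2 * tri s + s) + (\<alpha> + \<beta>) * (s * m) + \<alpha> * tri (m+1) + \<beta> * tri m"
    unfolding m tri_add by (simp add: algebra_simps)
  also have "\<dots> = (\<alpha> + \<beta>) * (rr * s) + Ej \<alpha> \<beta> (int rr - int s)"
    unfolding t2 using m by (simp add: Ej_def algebra_simps)
  finally show ?thesis .
next
  case False
  then obtain m where m: "s = rr + m" "m > 0" by (metis less_imp_add_positive not_le)
  have t2: "2 * tri rr + rr = rr * rr" using tri_2[of rr] by (cases rr) auto
  have "(\<alpha> + \<beta>) * (tri rr + tri s) + \<alpha> * rr + \<beta> * s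
      = (\<alpha> + \<beta>) * (2 * tri rr + rr) + (\<alpha> + \<beta>) * (rr * m) + \<alpha> * tri m + \<beta> * tri (m+1)"
    unfolding m tri_add by (simp add: algebra_simps)
  also have "\<dots> = (\<alpha> + \<beta>) * (rr * s) + Ej \<alpha> \<beta> (int rr - int s)"
    unfolding t2 using m by (simp add: Ej_def algebra_simps)
  finally show ?thesis .
qed


lemma neg_mono_pow: "(- (fps_const D * fps_X ^ a)) ^ k = fps_const ((-D)^k) * (fps_X ^ (a*k) :: 'a::comm_ring_1 fps)"
proof -
  have "- (fps_const D * fps_X ^ a) = fps_const (-D) * (fps_X ^ a :: 'a fps)" by (metis fps_const_neg mult_minus_left)
  thus ?thesis by (simp add: power_mult_distrib power_mult)
qed

lemma Xmono1: "fps_X^m * (fps_const a * fps_X^n) = fps_const a * (fps_X^(m+n) :: 'a::comm_ring_1 fps)"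
  by (simp add: power_add mult_ac)
lemma Xmono2: "fps_const a * fps_X^m * (fps_const b * fps_X^n) = fps_const (a*b) * (fps_X^(m+n) :: 'a::comm_ring_1 fps)"
  by (simp only: fps_const_mult[symmetric] power_add mult_ac)
lemma Xmono3: "fps_X^m * fps_X^n = (fps_X^(m+n) :: 'a::comm_ring_1 fps)"
  by (simp add: power_add)

lemma fin_jtp:
  fixes D D' :: "'a::comm_ring_1"
  assumes "D * D' = 1"
  shows "pp (fps_const D * fps_X^\<alpha>) (fps_X ^ (\<alpha>+\<beta>)) N * pp (fps_const D' * fps_X^\<beta>) (fps_X ^ (\<alpha>+\<beta>)) N
   = (\<Sum>rr\<le>N. \<Sum>s\<le>N. gb (fps_X ^ (\<alpha>+\<beta>)) N rr * gb (fps_X ^ (\<alpha>+\<beta>)) N s * (fps_X ^ (\<alpha>+\<beta>))^(rr*s) *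
        (fps_const (zp (-D) (-D') (int rr - int s)) * fps_X ^ Ej \<alpha> \<beta> (int rr - int s)))"
proof -
  define Q :: "'a fps" where "Q = fps_X ^ (\<alpha>+\<beta>)"
  have c: "pp c Q N = (\<Sum>k\<le>N. gb Q N k * Q^tri k * (-c)^k)" for c
    unfolding pp_def by (subst cauchy[symmetric]) simp
  have mono: "Q^tri rr * (-(fps_const D * fps_X^\<alpha>))^rr * (Q^tri s * (-(fps_const D' * fps_X^\<beta>))^s)
     = Q^(rr*s) * (fps_const (zp (-D) (-D') (int rr - int s)) * fps_X ^ Ej \<alpha> \<beta> (int rr - int s))" for rr s
  proof -
    have z: "(-D)^rr * (-D')^s = zp (-D) (-D') (int rr - int s)"
      by (rule zp_mult) (simp add: assms)
    have e1: "Q^tri rr * (-(fps_const D * fps_X^\<alpha>))^rr = fps_const ((-D)^rr) * fps_X^((\<alpha>+\<beta>)*tri rr + \<alpha>*rr)"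
      unfolding Q_def neg_mono_pow power_mult[symmetric] Xmono1 ..
    have e2: "Q^tri s * (-(fps_const D' * fps_X^\<beta>))^s = fps_const ((-D')^s) * fps_X^((\<alpha>+\<beta>)*tri s + \<beta>*s)"
      unfolding Q_def neg_mono_pow power_mult[symmetric] Xmono1 ..
    have "Q^tri rr * (-(fps_const D * fps_X^\<alpha>))^rr * (Q^tri s * (-(fps_const D' * fps_X^\<beta>))^s)
       = fps_const ((-D)^rr * (-D')^s) * fps_X ^ ((\<alpha> + \<beta>) * (tri rr + tri s) + \<alpha> * rr + \<beta> * s)"
      unfolding e1 e2 Xmono2 by (simp add: algebra_simps)
    also have "\<dots> = Q^(rr*s) * (fps_const (zp (-D) (-D') (int rr - int s)) * fps_X ^ Ej \<alpha> \<beta> (int rr - int s))"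
      unfolding z[symmetric] Ej_mult[symmetric] Q_def power_mult[symmetric] Xmono1 ..
    finally show ?thesis .
  qed
  show ?thesis
    unfolding Q_def[symmetric] c sum_product
  proof (intro sum.cong refl)
    fix x xa
    have "gb Q N x * Q ^ tri x * (- (fps_const D * fps_X ^ \<alpha>)) ^ x * (gb Q N xa * Q ^ tri xa * (- (fps_const D' * fps_X ^ \<beta>)) ^ xa)
      = gb Q N x * gb Q N xa * (Q^tri x * (-(fps_const D * fps_X^\<alpha>))^x * (Q^tri xa * (-(fps_const D' * fps_X^\<beta>))^xa))"
      by (simp only: mult_ac)
    also have "\<dots> = gb Q N x * gb Q N xa * Q ^ (x * xa) * (fps_const (zp (- D) (- D') (int x - int xa)) * fps_X ^ Ej \<alpha> \<beta> (int x - int xa))"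
      unfolding mono by (simp only: mult_ac)
    finally show "gb Q N x * Q ^ tri x * (- (fps_const D * fps_X ^ \<alpha>)) ^ x * (gb Q N xa * Q ^ tri xa * (- (fps_const D' * fps_X ^ \<beta>)) ^ xa)
      = gb Q N x * gb Q N xa * Q ^ (x * xa) * (fps_const (zp (- D) (- D') (int x - int xa)) * fps_X ^ Ej \<alpha> \<beta> (int x - int xa))" .
  qed
qed

lemma regroup:
  fixes F :: "nat \<Rightarrow> nat \<Rightarrow> 'a::comm_monoid_add"
  shows "(\<Sum>rr\<le>N. \<Sum>s\<le>N. F rr s) = (\<Sum>k\<in>{-int N..int N}. \<Sum>p\<in>{p\<in>{..N}\<times>{..N}. int (fst p) - int (snd p) = k}. F (fst p) (snd p))"
proof -
  have "(\<Sum>rr\<le>N. \<Sum>s\<le>N. F rr s) = (\<Sum>p\<in>{..N}\<times>{..N}. F (fst p) (snd p))"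
    by (simp add: sum.cartesian_product case_prod_beta)
  also have "\<dots> = (\<Sum>k\<in>{-int N..int N}. \<Sum>p\<in>{p\<in>{..N}\<times>{..N}. int (fst p) - int (snd p) = k}. F (fst p) (snd p))"
    by (rule sum.group[symmetric]) force+
  finally show ?thesis .
qed

lemma int_diff_eq: "int a - int b = int j \<longleftrightarrow> a = b + j"
  by (rule iffI) linarith+

lemma Gval:
  fixes Q :: "'a::idom"
  assumes Q: "Q \<noteq> 0" "\<And>m. qf Q m \<noteq> 0" and j: "j \<le> N"
  shows "(\<Sum>p\<in>{p\<in>{..N}\<times>{..N}. int (fst p) - int (snd p) = int j}. gb Q N (fst p) * gb Q N (snd p) * Q^(fst p * snd p))
        = gb Q (N+N) (N+j)"
proof -
  define f where "f u = gb Q N u * gb Q N (N+j-u) * Q^((N+j-u)*(N-u))" for u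
  have "(\<Sum>p\<in>{p\<in>{..N}\<times>{..N}. int (fst p) - int (snd p) = int j}. gb Q N (fst p) * gb Q N (snd p) * Q^(fst p * snd p))
      = (\<Sum>s\<in>{0..N-j}. gb Q N (s+j) * gb Q N s * Q^((s+j)*s))"
    by (rule sum.reindex_bij_witness[of _ "\<lambda>s. (s+j,s)" snd]) (use j in \<open>auto simp: int_diff_eq\<close>)
  also have "\<dots> = (\<Sum>s\<in>{0..N-j}. f (N - s))"
  proof (intro sum.cong refl)
    fix s assume s: "s \<in> {0..N-j}"
    have "gb Q N (N - s) = gb Q N s" using gb_sym[OF Q(2), of s N] s by auto
    moreover have "N + j - (N - s) = s + j" "N - (N - s) = s" using s j by auto
    ultimately show "gb Q N (s+j) * gb Q N s * Q^((s+j)*s) = f (N - s)"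
      by (simp add: f_def mult_ac add.commute)
  qed
  also have "\<dots> = (\<Sum>u\<in>{j..N}. f u)"
    by (rule sum.reindex_bij_witness[of _ "\<lambda>u. N - u" "\<lambda>u. N - u"]) (use j in auto)
  also have "\<dots> = (\<Sum>u=0..N+j. f u)"
  proof (rule sum.mono_neutral_left)
    show "\<forall>u\<in>{0..N+j} - {j..N}. f u = 0"
    proof
      fix u assume "u \<in> {0..N+j} - {j..N}"
      hence "N < u \<or> N < N + j - u" by auto
      thus "f u = 0" by (auto simp: f_def gb_zero)
    qed
  qed auto
  also have "\<dots> = gb Q (N+N) (N+j)" unfolding f_def by (rule vandermonde[OF Q(1), symmetric])
  finally show ?thesis .
qed

lemma Gval_neg:
  fixes Q :: "'a::comm_ring_1"
  shows "(\<Sum>p\<in>{p\<in>{..N}\<times>{..N}. int (fst p) - int (snd p) = - k}. gb Q N (fst p) * gb Q N (snd p) * Q^(fst p * snd p))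
       = (\<Sum>p\<in>{p\<in>{..N}\<times>{..N}. int (fst p) - int (snd p) = k}. gb Q N (fst p) * gb Q N (snd p) * Q^(fst p * snd p))"
  by (rule sum.reindex_bij_witness[of _ "\<lambda>p. (snd p, fst p)" "\<lambda>p. (snd p, fst p)"]) (auto simp: mult_ac)


declare agree_trans[trans]

lemma pp_nth0: "c$0 = 0 \<Longrightarrow> pp c Q m $ 0 = 1"
  by (induction m) (auto simp: pp_def)

lemma qf_pp: "qf Q m = pp Q Q m"
  by (simp add: qf_def pp_def)

lemma agree_mono_zero:
  fixes Y :: "'a::comm_ring_1 fps"
  assumes "n < e"
  shows "agree n (fps_const a * fps_X^e * Y) 0"
proof -
  have eq: "fps_const a * fps_X^e * Y = fps_X^e * (fps_const a * Y)" by (simp add: mult_ac)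
  show ?thesis unfolding agree_def eq using assms by (simp add: fps_X_power_mult_nth)
qed

lemma gbP:
  fixes Q :: "'a::comm_ring_1 fps"
  assumes Q: "Q$0 = 0" and j: "j < N"
  shows "agree (N - j - 1) (gb Q (N+N) (N+j) * Pinf Q Q) 1"
proof -
  define L where "L = N - j - 1"
  define P where "P = Pinf Q Q"
  have a: "agree L (qf Q m) P" if "N - j \<le> m" for m
    unfolding qf_pp P_def by (rule Pinf_agree[OF Q]) (use that j in \<open>auto simp: L_def\<close>)
  have "gb Q (N+N) (N+j) * qf Q (N+j) * qf Q (N+N-(N+j)) = qf Q (N+N)"
    by (rule gb_prod) (use j in simp)
  hence e: "gb Q (N+N) (N+j) * qf Q (N+j) * qf Q (N-j) = qf Q (N+N)" by simp
  have "agree L (gb Q (N+N) (N+j) * P * P) (gb Q (N+N) (N+j) * qf Q (N+j) * qf Q (N-j))"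
    by (intro agree_mult agree_refl agree_sym[OF a]) auto
  also have "\<dots> = qf Q (N+N)" by (rule e)
  finally have "agree L (gb Q (N+N) (N+j) * P * P) (1 * P)"
    using a[of "N+N"] agree_trans by force
  hence "agree L (gb Q (N+N) (N+j) * P) 1"
    by (rule agree_cancel) (simp add: P_def Pinf_0' Q)
  thus ?thesis by (simp add: L_def P_def)
qed

theorem jtp:
  fixes D D' :: "'a::idom"
  assumes DD: "D * D' = 1" and ab: "1 \<le> \<alpha> + \<beta>"
  shows "Pinf (fps_const D * fps_X^\<alpha>) (fps_X^(\<alpha>+\<beta>)) * Pinf (fps_const D' * fps_X^\<beta>) (fps_X^(\<alpha>+\<beta>))
          * Pinf (fps_X^(\<alpha>+\<beta>)) (fps_X^(\<alpha>+\<beta>)) = msum UNIV (zp (-D) (-D')) (Ej \<alpha> \<beta>)"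
proof (rule agree_eq)
  fix n
  define Q :: "'a fps" where "Q = fps_X^(\<alpha>+\<beta>)"
  define c where "c = fps_const D * (fps_X^\<alpha> :: 'a fps)"
  define c' where "c' = fps_const D' * (fps_X^\<beta> :: 'a fps)"
  define P where "P = Pinf Q Q"
  define N where "N = (2*n + 2::nat)"
  define T where "T k = fps_const (zp (-D) (-D') k) * (fps_X ^ Ej \<alpha> \<beta> k :: 'a fps)" for k
  define G where "G k = (\<Sum>p\<in>{p\<in>{..N}\<times>{..N}. int (fst p) - int (snd p) = k}. gb Q N (fst p) * gb Q N (snd p) * Q^(fst p * snd p))" for k
  define K where "K = {-int N..int N}"
  have Q0: "Q$0 = 0" using ab by (simp add: Q_def) linarith
  have Qnz: "Q \<noteq> 0" by (simp add: Q_def)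
  have qfnz: "qf Q m \<noteq> 0" for m
  proof -
    have "qf Q m $ 0 = 1" unfolding qf_pp by (rule pp_nth0) (simp add: Q0)
    thus ?thesis by auto
  qed
  have "agree n (Pinf c Q * Pinf c' Q * P) (pp c Q N * pp c' Q N * P)"
    by (intro agree_mult agree_refl agree_sym[OF Pinf_agree[OF Q0]]) (auto simp: N_def)
  also have "pp c Q N * pp c' Q N = (\<Sum>k\<in>K. G k * T k)"
  proof -
    have "pp c Q N * pp c' Q N = (\<Sum>rr\<le>N. \<Sum>s\<le>N. gb Q N rr * gb Q N s * Q^(rr*s) * T (int rr - int s))"
      unfolding c_def c'_def Q_def T_def by (rule fin_jtp[OF DD])
    also have "\<dots> = (\<Sum>k\<in>K. \<Sum>p\<in>{p\<in>{..N}\<times>{..N}. int (fst p) - int (snd p) = k}. gb Q N (fst p) * gb Q N (snd p) * Q^(fst p * snd p) * T (int (fst p) - int (snd p)))"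
      unfolding K_def by (rule regroup)
    also have "\<dots> = (\<Sum>k\<in>K. G k * T k)"
      unfolding G_def sum_distrib_right by (intro sum.cong refl) auto
    finally show ?thesis .
  qed
  also have "(\<Sum>k\<in>K. G k * T k) * P = (\<Sum>k\<in>K. T k * (G k * P))"
    by (simp add: sum_distrib_right sum_distrib_left mult_ac)
  also have "agree n \<dots> (\<Sum>k\<in>K. T k)"
  proof (rule agree_sum)
    fix k assume kK: "k \<in> K"
    show "agree n (T k * (G k * P)) (T k)"
    proof (cases "\<bar>k\<bar> \<le> int n + 1")
      case True
      define j where "j = nat \<bar>k\<bar>"
      have jN: "j < N" using True by (simp add: j_def N_def)
      have Gk: "G k = gb Q (N+N) (N+j)"
      proof (cases "k \<ge> 0")
        case True
        hence "k = int j" by (simp add: j_def)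
        thus ?thesis unfolding G_def using Gval[OF Qnz qfnz, of j N] jN by simp
      next
        case False
        hence "k = - int j" by (simp add: j_def)
        thus ?thesis unfolding G_def using Gval[OF Qnz qfnz, of j N] Gval_neg[where N=N and Q=Q and k="int j"] jN by simp
      qed
      have "agree (N - j - 1) (G k * P) 1" unfolding Gk P_def by (rule gbP[OF Q0 jN])
      hence "agree n (G k * P) 1" by (rule agree_mono) (use True in \<open>simp add: N_def j_def\<close>)
      hence "agree n (T k * (G k * P)) (T k * 1)" by (intro agree_mult agree_refl)
      thus ?thesis by simp
    next
      case False
      hence big: "n < Ej \<alpha> \<beta> k" using Ej_big[OF ab, of k n] by linarith
      have "agree n (T k * (G k * P)) 0" unfolding T_def by (rule agree_mono_zero[OF big])
      moreover have "agree n (T k * 1) 0" unfolding T_def by (rule agree_mono_zero[OF big])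
      ultimately show ?thesis by (auto intro: agree_trans agree_sym)
    qed
  qed
  also have "agree n (\<Sum>k\<in>K. T k) (msum UNIV (zp (-D) (-D')) (Ej \<alpha> \<beta>))"
    unfolding T_def
  proof (rule agree_msum_finite)
    show "finite K" by (simp add: K_def)
    show "K \<subseteq> UNIV" by simp
    fix k assume "Ej \<alpha> \<beta> k \<le> n"
    hence "\<bar>k\<bar> \<le> int n + 1" by (rule Ej_big[OF ab])
    thus "k \<in> K" by (auto simp: K_def N_def abs_le_iff)
  qed
  finally show "agree n (Pinf (fps_const D * fps_X^\<alpha>) (fps_X^(\<alpha>+\<beta>)) * Pinf (fps_const D' * fps_X^\<beta>) (fps_X^(\<alpha>+\<beta>))
          * Pinf (fps_X^(\<alpha>+\<beta>)) (fps_X^(\<alpha>+\<beta>))) (msum UNIV (zp (-D) (-D')) (Ej \<alpha> \<beta>))"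
    unfolding c_def c'_def Q_def P_def .
qed


lemma prod_split_mod:
  fixes f :: "nat \<Rightarrow> 'a::comm_monoid_mult"
  assumes m: "0 < m"
  shows "(\<Prod>i<m*N. f i) = (\<Prod>rr<m. \<Prod>j<N. f (rr + m*j))"
proof -
  have "(\<Prod>i<m*N. f i) = (\<Prod>p\<in>{..<m}\<times>{..<N}. f (fst p + m * snd p))"
  proof (rule prod.reindex_bij_witness[of _ "\<lambda>p. fst p + m * snd p" "\<lambda>i. (i mod m, i div m)"])
    fix a :: "nat \<times> nat" assume a: "a \<in> {..<m}\<times>{..<N}"
    then obtain x y where xy: "a = (x,y)" "x < m" "y < N" by auto
    show "((fst a + m * snd a) mod m, (fst a + m * snd a) div m) = a" using xy m by auto
    have "x + m * y < m * N"
    proof -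
      have "x + m*y < m + m*y" using xy by simp
      also have "\<dots> = m * (Suc y)" by simp
      also have "\<dots> \<le> m * N" using xy by (intro mult_le_mono2) simp
      finally show ?thesis .
    qed
    thus "fst a + m * snd a \<in> {..<m*N}" using xy by simp
  qed (use m in \<open>auto simp: less_mult_imp_div_less mult.commute\<close>)
  also have "\<dots> = (\<Prod>rr<m. \<Prod>j<N. f (rr + m*j))"
    by (simp add: prod.cartesian_product case_prod_beta)
  finally show ?thesis .
qed

lemma pp_split:
  assumes "0 < m"
  shows "pp c Q (m*N) = (\<Prod>rr<m. pp (c * Q^rr) (Q^m) N)"
proof -
  show ?thesis unfolding pp_def prod_split_mod[OF assms]
    by (intro prod.cong refl) (simp add: power_add power_mult[symmetric] mult.commute)
qed

lemma Pinf_split: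
  fixes Q c :: "'a::comm_ring_1 fps"
  assumes m: "0 < m" and Q: "Q$0 = 0"
  shows "Pinf c Q = (\<Prod>rr<m. Pinf (c * Q^rr) (Q^m))"
proof (rule agree_eq)
  fix n
  have Qm: "(Q^m)$0 = 0" using Q m by (simp add: fps_nth_power_0 zero_power)
  have "agree n (Pinf c Q) (pp c Q (m*(Suc n)))"
  proof (rule agree_sym, rule Pinf_agree[OF Q])
    show "n < m * Suc n" using m by (cases m) auto
  qed
  also have "pp c Q (m*(Suc n)) = (\<Prod>rr<m. pp (c * Q^rr) (Q^m) (Suc n))" by (rule pp_split[OF m])
  also have "agree n \<dots> (\<Prod>rr<m. Pinf (c * Q^rr) (Q^m))"
    by (intro agree_prod Pinf_agree[OF Qm]) simp
  finally show "agree n (Pinf c Q) (\<Prod>rr<m. Pinf (c * Q^rr) (Q^m))" .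
qed

lemma Pinf_peel:
  fixes Q c :: "'a::comm_ring_1 fps"
  assumes Q: "Q$0 = 0"
  shows "Pinf c Q = (1 - c) * Pinf (c * Q) Q"
proof (rule agree_eq)
  fix n
  have "agree n (Pinf c Q) (pp c Q (Suc (Suc n)))" by (rule agree_sym, rule Pinf_agree[OF Q]) simp
  also have "pp c Q (Suc (Suc n)) = (1 - c) * pp (c*Q) Q (Suc n)"
    unfolding pp_def prod.lessThan_Suc_shift by (simp add: mult_ac)
  also have "agree n \<dots> ((1 - c) * Pinf (c * Q) Q)"
    by (intro agree_mult agree_refl Pinf_agree[OF Q]) simp
  finally show "agree n (Pinf c Q) ((1 - c) * Pinf (c * Q) Q)" .
qed

definition hj :: "nat \<Rightarrow> 'a::comm_ring_1 fps fps \<Rightarrow> 'a fps" where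
  "hj j F = Abs_fps (\<lambda>n. F$n$j)"

lemma hj_nth[simp]: "hj j F $ n = F$n$j" by (simp add: hj_def)

lemma hj_add[simp]: "hj j (F + G) = hj j F + hj j G" by (simp add: fps_eq_iff)
lemma hj_diff[simp]: "hj j (F - G) = hj j F - hj j G" by (simp add: fps_eq_iff)
lemma hj_uminus[simp]: "hj j (- F) = - hj j F" by (simp add: fps_eq_iff)
lemma hj_one[simp]: "hj j 1 = (if j = 0 then 1 else 0)" by (simp add: fps_eq_iff)
lemma hj_const[simp]: "hj j (fps_const a) = fps_const (a$j)" by (simp add: fps_eq_iff)
lemma hj_X[simp]: "hj j fps_X = (if j = 0 then fps_X else 0)" by (simp add: fps_eq_iff)
lemma hj_sum: "hj j (sum f A) = (\<Sum>x\<in>A. hj j (f x))"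
  by (simp add: fps_eq_iff fps_sum_nth)

lemma h0_mult[simp]: "hj 0 (F * G) = hj 0 F * hj 0 G"
  by (simp add: fps_eq_iff fps_mult_nth fps_sum_nth)

lemma h1_mult: "hj 1 (F * G) = hj 1 F * hj 0 G + hj 0 F * hj 1 G"
proof -
  have "(a * b) $ 1 = a$1 * b$0 + a$0 * b$1" for a b :: "'a fps"
    by (simp add: fps_mult_nth numeral_2_eq_2)
  thus ?thesis by (simp add: fps_eq_iff fps_mult_nth fps_sum_nth sum.distrib)
qed

lemma h0_prod: "hj 0 (prod f A) = (\<Prod>x\<in>A. hj 0 (f x))"
  by (induction A rule: infinite_finite_induct) auto

lemma h0_power[simp]: "hj 0 (F ^ k) = hj 0 F ^ k"
  by (induction k) auto

lemma h0_pp: "hj 0 (pp c Q N) = pp (hj 0 c) (hj 0 Q) N"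
  by (simp add: pp_def h0_prod)

lemma hj_agree: "agree n F G \<Longrightarrow> agree n (hj j F) (hj j G)"
  by (simp add: agree_def)

lemma h0_Pinf:
  assumes Q: "Q$0 = 0"
  shows "hj 0 (Pinf c Q) = Pinf (hj 0 c) (hj 0 Q)"
proof (rule agree_eq)
  fix n
  have Q': "hj 0 Q $ 0 = 0" using Q by simp
  have "agree n (hj 0 (Pinf c Q)) (hj 0 (pp c Q (Suc n)))"
    by (rule hj_agree, rule agree_sym, rule Pinf_agree[OF Q]) simp
  also have "hj 0 (pp c Q (Suc n)) = pp (hj 0 c) (hj 0 Q) (Suc n)" by (rule h0_pp)
  also have "agree n \<dots> (Pinf (hj 0 c) (hj 0 Q))" by (rule Pinf_agree[OF Q']) simp
  finally show "agree n (hj 0 (Pinf c Q)) (Pinf (hj 0 c) (hj 0 Q))" .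
qed

lemma hj_msum: "hj j (msum A c e) = msum A (\<lambda>x. c x $ j) e"
  by (simp add: fps_eq_iff msum_nth fps_sum_nth)


lemma zp_pow: "a * b = 1 \<Longrightarrow> zp a b k = a ^ nat k * b ^ nat (-k)"
  using zp_mult[of a b "nat k" "nat (-k)"] by simp

lemma zp_add: "a * b = 1 \<Longrightarrow> zp a b (k + l) = zp a b k * zp a b l"
proof -
  assume ab: "a * b = 1"
  have "zp a b k * zp a b l = a^(nat k + nat l) * b^(nat (-k) + nat (-l))"
    by (simp add: zp_pow[OF ab] power_add mult_ac)
  also have "\<dots> = zp a b (int (nat k + nat l) - int (nat (-k) + nat (-l)))" by (rule zp_mult[OF ab])
  also have "int (nat k + nat l) - int (nat (-k) + nat (-l)) = k + l" by (cases "k \<ge> 0"; cases "l \<ge> 0") simp_all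
  finally show ?thesis by (rule sym)
qed

lemma zp_neg: "zp (-a) (-b) k = zp (-1) (-1) k * zp a b (k::int)"
  by (simp add: zp_def power_minus[of a] power_minus[of b])

lemma zp_sq: "a * b = 1 \<Longrightarrow> zp (a^2) (b^2) k = zp a b (2*k)"
proof -
  assume ab: "a * b = 1"
  have "zp (a^2) (b^2) k = zp a b k * zp a b k"
    by (simp add: zp_def power2_eq_square power_mult_distrib)
  also have "\<dots> = zp a b (2*k)" using zp_add[OF ab, of k k] by (metis mult_2)
  finally show ?thesis .
qed

lemma sg_add: "zp (-1) (-1) (k + l) = zp (-1) (-1) k * (zp (-1) (-1) l :: 'a::comm_ring_1)"
  by (rule zp_add) simp

lemma sg_even: "zp (-1) (-1) (2*k) = (1 :: 'a::comm_ring_1)"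
proof -
  have "zp (-1) (-1) (2*k) = zp ((-1)^2) ((-1)^2) k" by (rule zp_sq[symmetric]) simp
  also have "\<dots> = (1::'a)" by (simp add: zp_def)
  finally show ?thesis .
qed

lemma sg_odd: "zp (-1) (-1) (2*k + 1) = (-1 :: 'a::comm_ring_1)"
proof -
  have "zp (-1) (-1) 1 = (-1::'a)" by (simp add: zp_def)
  thus ?thesis using sg_add[of "2*k" 1] sg_even[of k] by (metis mult_1)
qed

lemma tri_int: "2 * int (tri l) = int l * (int l - 1)"
proof -
  have "2 * tri l = l * (l - 1)" by (rule tri_2)
  hence "2 * int (tri l) = int (l * (l - 1))" by (metis of_nat_mult of_nat_numeral)
  moreover have "int (l * (l - 1)) = int l * (int l - 1)" by (cases l) (simp_all add: algebra_simps)
  ultimately show ?thesis by simp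
qed

lemma Ej_int: "2 * int (Ej \<alpha> \<beta> k) = int \<alpha> * (k * (k+1)) + int \<beta> * (k * (k - 1))"
proof (cases "k \<ge> 0")
  case True
  have "2 * int (Ej \<alpha> \<beta> k) = int \<alpha> * (2 * int (tri (nat k + 1))) + int \<beta> * (2 * int (tri (nat k)))"
    using True by (simp add: Ej_def algebra_simps)
  also have "\<dots> = int \<alpha> * (k * (k+1)) + int \<beta> * (k * (k - 1))"
    unfolding tri_int using True by (simp add: algebra_simps)
  finally show ?thesis .
next
  case False
  have "2 * int (Ej \<alpha> \<beta> k) = int \<alpha> * (2 * int (tri (nat (-k)))) + int \<beta> * (2 * int (tri (nat (-k) + 1)))"
    using False by (simp add: Ej_def algebra_simps)
  also have "\<dots> = int \<alpha> * (k * (k+1)) + int \<beta> * (k * (k - 1))"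
    unfolding tri_int using False by (simp add: algebra_simps)
  finally show ?thesis .
qed

lemma pent_even: "even (p * (3 * p - 1 :: int))"
proof (cases "even p")
  case False
  hence "even (3 * p - 1)" by presburger
  thus ?thesis by simp
qed simp

lemma pent_int: "2 * pent p = p * (3 * p - 1)"
  unfolding pent_def using pent_even[of p] by simp

lemma pent_ge: "\<bar>p\<bar> \<le> pent p"
proof -
  have "2 * \<bar>p\<bar> \<le> p * (3 * p - 1)"
  proof (cases "p \<ge> 0")
    case True
    show ?thesis
    proof (cases "p = 0")
      case False
      hence "2 \<le> 3 * p - 1" using True by simp
      hence "p * 2 \<le> p * (3 * p - 1)" using True by (intro mult_left_mono) auto
      thus ?thesis using True by simp
    qed simp
  next
    case False
    hence "2 \<le> 1 - 3 * p" by simp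
    hence "(-p) * 2 \<le> (-p) * (1 - 3 * p)" using False by (intro mult_left_mono) auto
    thus ?thesis using False by (simp add: algebra_simps)
  qed
  thus ?thesis using pent_int[of p] by simp
qed

lemma ffib_pent: "ffib A (\<lambda>p. nat (pent p))"
proof -
  have "{p\<in>A. nat (pent p) = n} \<subseteq> {-int n..int n}" for n
  proof
    fix p assume "p \<in> {p\<in>A. nat (pent p) = n}"
    hence "\<bar>p\<bar> \<le> int n" using pent_ge[of p] by auto
    thus "p \<in> {-int n..int n}" by (simp add: abs_le_iff)
  qed
  thus ?thesis unfolding ffib_def by (meson finite_atLeastAtMost_int finite_subset)
qed


definition eL :: "int \<times> int \<Rightarrow> nat" where "eL = (\<lambda>(x,y). Ej 0 1 x + Ej 1 1 y)"
definition eR :: "int \<times> int \<Rightarrow> nat" where "eR = (\<lambda>(x,y). Ej 2 4 x + nat (pent y))"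

lemma eL_int: "2 * int (eL (m,n)) = m * (m - 1) + 2 * n * n"
proof -
  have "2 * int (eL (m,n)) = 2 * int (Ej 0 1 m) + 2 * int (Ej 1 1 n)" by (simp add: eL_def)
  also have "\<dots> = m * (m - 1) + 2 * n * n" unfolding Ej_int by (simp add: algebra_simps)
  finally show ?thesis .
qed

lemma eR_int: "2 * int (eR (j,p)) = 6 * j * j - 2 * j + p * (3 * p - 1)"
proof -
  have p0: "0 \<le> pent p" using pent_ge[of p] abs_ge_zero[of p] by linarith
  hence pn: "int (nat (pent p)) = pent p" by (rule nat_0_le)
  have "2 * int (eR (j,p)) = 2 * int (Ej 2 4 j) + 2 * pent p" using p0 by (simp add: eR_def pn)
  also have "\<dots> = 6 * j * j - 2 * j + p * (3 * p - 1)" unfolding Ej_int pent_int by (simp add: algebra_simps)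
  finally show ?thesis .
qed

lemma eq_via_2: "2 * int (a::nat) = 2 * int b \<Longrightarrow> a = b" by simp

lemma eL_phi1: "eL (p + 2*j, p - j) = eR (j, p)"
  by (rule eq_via_2, unfold eL_int eR_int) (simp add: algebra_simps)

lemma eL_phi2: "eL (1 - p - 2*j, j - p) = eR (j, p)"
  by (rule eq_via_2, unfold eL_int eR_int) (simp add: algebra_simps)

lemma eL_iota: "m + 2*n = 3*q + 2 \<Longrightarrow> eL (m + 2*n - 2*(2*q+1-n), 2*q+1-n) = eL (m, n)"
proof (rule eq_via_2, unfold eL_int)
  assume "m + 2*n = 3*q + 2"
  hence m: "m = 3*q + 2 - 2*n" by simp
  show "(m + 2 * n - 2 * (2 * q + 1 - n)) * (m + 2 * n - 2 * (2 * q + 1 - n) - 1) + 2 * (2 * q + 1 - n) * (2 * q + 1 - n) =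
    m * (m - 1) + 2 * n * n" unfolding m by (simp add: algebra_simps)
qed

definition sg :: "int \<Rightarrow> 'a::comm_ring_1" where "sg = zp (-1) (-1)"

lemma sg_add': "sg (k + l) = sg k * sg l" by (simp add: sg_def sg_add)
lemma sg_2k: "sg (2*k) = 1" by (simp add: sg_def sg_even)
lemma sg_2k1: "sg (2*k+1) = -1" by (simp add: sg_def sg_odd)


definition A0 :: "(int \<times> int) set" where "A0 = {x. (fst x + 2 * snd x) mod 3 = 0}"
definition A1 :: "(int \<times> int) set" where "A1 = {x. (fst x + 2 * snd x) mod 3 = 1}"
definition A2 :: "(int \<times> int) set" where "A2 = {x. (fst x + 2 * snd x) mod 3 = 2}"

definition phi1 :: "int \<times> int \<Rightarrow> int \<times> int" where "phi1 = (\<lambda>(j,p). (p + 2*j, p - j))"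
definition psi1 :: "int \<times> int \<Rightarrow> int \<times> int" where "psi1 = (\<lambda>(m,n). ((m + 2*n) div 3 - n, (m + 2*n) div 3))"
definition phi2 :: "int \<times> int \<Rightarrow> int \<times> int" where "phi2 = (\<lambda>(j,p). (1 - p - 2*j, j - p))"
definition psi2 :: "int \<times> int \<Rightarrow> int \<times> int" where "psi2 = (\<lambda>(m,n). (n + (1 - (m + 2*n)) div 3, (1 - (m + 2*n)) div 3))"
definition iota :: "int \<times> int \<Rightarrow> int \<times> int" where
  "iota = (\<lambda>(m,n). (m + 2*n - 2*(2*((m + 2*n) div 3)+1-n), 2*((m + 2*n) div 3)+1-n))"

lemma bij1: "bij_betw phi1 UNIV A0"
proof (rule bij_betw_byWitness[where f'=psi1])
  show "\<forall>a\<in>UNIV. psi1 (phi1 a) = a" by (auto simp: phi1_def psi1_def)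
  show "\<forall>a'\<in>A0. phi1 (psi1 a') = a'"
  proof
    fix a assume "a \<in> A0"
    then obtain m n where a: "a = (m,n)" "(m + 2*n) mod 3 = 0" by (cases a) (auto simp: A0_def)
    hence "3 * ((m + 2*n) div 3) = m + 2*n" by presburger
    thus "phi1 (psi1 a) = a" using a by (auto simp: phi1_def psi1_def)
  qed
  show "phi1 ` UNIV \<subseteq> A0" by (auto simp: phi1_def A0_def)
  show "psi1 ` A0 \<subseteq> UNIV" by simp
qed

lemma bij2: "bij_betw phi2 UNIV A1"
proof (rule bij_betw_byWitness[where f'=psi2])
  show "\<forall>a\<in>UNIV. psi2 (phi2 a) = a"
  proof
    fix a :: "int \<times> int" obtain j p where a: "a = (j,p)" by force
    have "(1 - (1 - p - 2*j + 2*(j - p))) div 3 = p" by simp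
    thus "psi2 (phi2 a) = a" using a by (simp add: phi2_def psi2_def)
  qed
  show "\<forall>a'\<in>A1. phi2 (psi2 a') = a'"
  proof
    fix a assume "a \<in> A1"
    then obtain m n where a: "a = (m,n)" "(m + 2*n) mod 3 = 1" by (cases a) (auto simp: A1_def)
    hence "3 * ((1 - (m + 2*n)) div 3) = 1 - (m + 2*n)" by presburger
    thus "phi2 (psi2 a) = a" using a by (auto simp: phi2_def psi2_def)
  qed
  show "phi2 ` UNIV \<subseteq> A1"
  proof
    fix x assume "x \<in> phi2 ` UNIV"
    then obtain j p where "x = phi2 (j,p)" by auto
    hence "fst x + 2 * snd x = 1 - 3*p" by (simp add: phi2_def)
    thus "x \<in> A1" unfolding A1_def by simp presburger
  qed
  show "psi2 ` A1 \<subseteq> UNIV" by simp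
qed

lemma iota_A2:
  assumes "x \<in> A2"
  shows "iota x \<in> A2" "iota (iota x) = x" "eL (iota x) = eL x"
    "(sg (fst (iota x) + snd (iota x)) :: 'a::comm_ring_1) = - sg (fst x + snd x)"
    "fst (iota x) + 2 * snd (iota x) = fst x + 2 * snd x"
proof -
  obtain m n where x: "x = (m,n)" by force
  define q where "q = (m + 2*n) div 3"
  have e: "m + 2*n = 3*q + 2" using assms unfolding x q_def A2_def by simp presburger
  have ix0: "iota (m,n) = (m + 2*n - 2*(2*q+1-n), 2*q+1-n)" by (simp add: iota_def q_def)
  hence ix: "iota x = (m + 2*n - 2*(2*q+1-n), 2*q+1-n)" by (simp add: x)
  show e2: "fst (iota x) + 2 * snd (iota x) = fst x + 2 * snd x" using ix x by simp
  thus "iota x \<in> A2" using assms by (simp add: A2_def)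
  have "(m + 2 * n - 2 * (2 * q + 1 - n) + 2 * (2 * q + 1 - n)) div 3 = q" using e by simp
  thus "iota (iota x) = x" unfolding ix unfolding x by (simp add: iota_def)
  show "eL (iota x) = eL x" unfolding ix unfolding x by (rule eL_iota[OF e])
  have h: "m + 2 * n - 2 * (2 * q + 1 - n) + (2 * q + 1 - n) = (m + n) + (2*(n - q - 1) + 1)" by simp
  have c1: "sg (m + 2 * n - 2 * (2 * q + 1 - n) + (2 * q + 1 - n)) = (sg (m+n) * sg (2*(n - q - 1) + 1) :: 'a)"
    unfolding h by (rule sg_add')
  have s1: "sg (2*(n - q - 1) + 1) = (-1 :: 'a)" by (rule sg_2k1)
  from c1 s1 have c2: "sg (m + 2 * n - 2 * (2 * q + 1 - n) + (2 * q + 1 - n)) = - (sg (m+n) :: 'a)"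
    by (simp only: mult_minus1_right)
  show "(sg (fst (iota x) + snd (iota x)) :: 'a) = - sg (fst x + snd x)"
    unfolding ix unfolding x fst_conv snd_conv by (rule c2)
qed


lemma A_cover: "UNIV = A0 \<union> (A1 \<union> A2)"
  by (auto simp: A0_def A1_def A2_def)

lemma A_disj: "A0 \<inter> (A1 \<union> A2) = {}" "A1 \<inter> A2 = {}"
  by (auto simp: A0_def A1_def A2_def)

theorem lattice:
  fixes z w :: "'a::{idom,ring_char_0}"
  assumes zw: "z * w = 1"
  shows "msum UNIV (zp (-z) (-w)) (Ej 0 1) * msum UNIV (zp (-(z^2)) (-(w^2))) (Ej 1 1)
       = msum UNIV (zp (-1) (-1)) (Ej 2 4) * msum UNIV (\<lambda>p. zp z w (3*p) - zp z w (1-3*p)) (\<lambda>p. nat (pent p))"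
proof -
  define cL :: "int \<times> int \<Rightarrow> 'a" where "cL x = sg (fst x + snd x) * zp z w (fst x + 2*snd x)" for x
  define c0 :: "int \<times> int \<Rightarrow> 'a" where "c0 x = sg (fst x) * zp z w (3*snd x)" for x
  define c1 :: "int \<times> int \<Rightarrow> 'a" where "c1 x = sg (fst x) * zp z w (1 - 3*snd x)" for x
  have zw2: "z^2 * w^2 = 1" using zw by (simp add: power_mult_distrib[symmetric])
  have ffL: "ffib UNIV eL"
    using ffib_times[OF ffib_Ej[of 0 1 UNIV] ffib_Ej[of 1 1 UNIV]] by (simp add: eL_def)
  have ffR: "ffib UNIV eR"
    using ffib_times[OF ffib_Ej[of 2 4 UNIV] ffib_pent[of UNIV]] by (simp add: eR_def)
  have L: "msum UNIV (zp (-z) (-w)) (Ej 0 1) * msum UNIV (zp (-(z^2)) (-(w^2))) (Ej 1 1) = msum UNIV cL eL"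
  proof -
    have "msum UNIV (zp (-z) (-w)) (Ej 0 1) * msum UNIV (zp (-(z^2)) (-(w^2))) (Ej 1 1)
        = msum (UNIV \<times> UNIV) (\<lambda>(x,y). zp (-z) (-w) x * zp (-(z^2)) (-(w^2)) y) (\<lambda>(x,y). Ej 0 1 x + Ej 1 1 y)"
      by (rule msum_mult[OF ffib_Ej ffib_Ej]) simp_all
    also have "\<dots> = msum UNIV cL eL"
      unfolding UNIV_Times_UNIV
    proof (rule msum_cong)
      fix x :: "int \<times> int"
      obtain m n where x: "x = (m,n)" by force
      have "zp (-z) (-w) m * zp (-(z^2)) (-(w^2)) n = sg m * zp z w m * (sg n * zp z w (2*n))"
        unfolding zp_neg[of z w] zp_neg[of "z^2" "w^2"] zp_sq[OF zw2] zp_sq[OF zw] sg_def by simp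
      also have "\<dots> = cL x" unfolding cL_def x by (simp add: sg_add' zp_add[OF zw] mult_ac)
      finally show "(\<lambda>(x,y). zp (-z) (-w) x * zp (-(z^2)) (-(w^2)) y) x = cL x" by (simp add: x)
      show "(\<lambda>(x,y). Ej 0 1 x + Ej 1 1 y) x = eL x" by (simp add: x eL_def)
    qed
    finally show ?thesis by simp
  qed
  have R: "msum UNIV (zp (-1) (-1)) (Ej 2 4) * msum UNIV (\<lambda>p. zp z w (3*p) - zp z w (1-3*p)) (\<lambda>p. nat (pent p))
      = msum UNIV c0 eR - msum UNIV c1 eR"
  proof -
    have "msum UNIV (zp (-1) (-1)) (Ej 2 4) * msum UNIV (\<lambda>p. zp z w (3*p) - zp z w (1-3*p)) (\<lambda>p. nat (pent p))
       = msum (UNIV \<times> UNIV) (\<lambda>(x,y). zp (-1) (-1) x * (zp z w (3*y) - zp z w (1-3*y))) (\<lambda>(x,y). Ej 2 4 x + nat (pent y))"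
      by (rule msum_mult[OF ffib_Ej ffib_pent]) simp
    also have "\<dots> = msum UNIV (\<lambda>x. c0 x - c1 x) eR"
      unfolding UNIV_Times_UNIV by (rule msum_cong) (auto simp: c0_def c1_def eR_def sg_def algebra_simps)
    also have "\<dots> = msum UNIV c0 eR - msum UNIV c1 eR" by (rule msum_diff)
    finally show ?thesis .
  qed
  have ffA: "ffib A eL" for A by (rule ffib_subset[OF ffL]) simp
  have U: "msum UNIV cL eL = msum A0 cL eL + (msum A1 cL eL + msum A2 cL eL)"
    by (subst A_cover, subst msum_union, (simp_all add: A_disj ffA), subst msum_union) (simp_all add: A_disj ffA)
  have S0: "msum A0 cL eL = msum UNIV c0 eR"
  proof -
    have "msum A0 cL eL = msum UNIV (cL \<circ> phi1) (eL \<circ> phi1)" by (rule msum_reindex[OF bij1])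
    also have "\<dots> = msum UNIV c0 eR"
    proof (rule msum_cong)
      fix x :: "int \<times> int"
      obtain j p where x: "x = (j,p)" by force
      have "sg (p + 2*j + (p - j)) = (sg j :: 'a)"
      proof -
        have "p + 2*j + (p - j) = 2*p + j" by simp
        thus ?thesis by (simp add: sg_add' sg_2k)
      qed
      thus "(cL \<circ> phi1) x = c0 x" by (simp add: x cL_def c0_def phi1_def)
      show "(eL \<circ> phi1) x = eR x" by (simp add: x phi1_def eL_phi1)
    qed
    finally show ?thesis .
  qed
  have S1: "msum A1 cL eL = - msum UNIV c1 eR"
  proof -
    have "msum A1 cL eL = msum UNIV (cL \<circ> phi2) (eL \<circ> phi2)" by (rule msum_reindex[OF bij2])
    also have "\<dots> = msum UNIV (\<lambda>x. - c1 x) eR"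
    proof (rule msum_cong)
      fix x :: "int \<times> int"
      obtain j p where x: "x = (j,p)" by force
      have "sg (1 - p - 2*j + (j - p)) = (- sg j :: 'a)"
      proof -
        have "1 - p - 2*j + (j - p) = (2*(-p-j) + 1) + j" by simp
        hence h1: "sg (1 - p - 2*j + (j - p)) = (sg (2*(-p-j) + 1) * sg j :: 'a)" by (simp only: sg_add')
        have s1: "sg (2*(-p-j)+1) = (-1::'a)" by (rule sg_2k1)
        from h1 s1 show ?thesis by (simp only: mult_minus1)
      qed
      moreover have "1 - p - 2*j + 2*(j - p) = 1 - 3*p" by simp
      ultimately show "(cL \<circ> phi2) x = - c1 x" by (simp add: x cL_def c1_def phi2_def)
      show "(eL \<circ> phi2) x = eR x" by (simp add: x phi2_def eL_phi2)
    qed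
    also have "\<dots> = - msum UNIV c1 eR" by (rule msum_uminus)
    finally show ?thesis .
  qed
  have S2: "msum A2 cL eL = 0"
  proof (rule msum_invol_zero[where \<iota>=iota])
    show "ffib A2 eL" by (rule ffA)
    fix x assume x: "x \<in> A2"
    show "iota x \<in> A2" "iota (iota x) = x" "eL (iota x) = eL x" using iota_A2[OF x] by auto
    have "(sg (fst (iota x) + snd (iota x)) :: 'a) = - sg (fst x + snd x)" by (rule iota_A2(4)[OF x])
    thus "cL (iota x) = - cL x" unfolding cL_def using iota_A2(5)[OF x] by simp
  qed
  show ?thesis unfolding L R U S0 S1 S2 by simp
qed


lemma pow_nth01:
  fixes f :: "'a::comm_ring_1 fps"
  assumes "f$0 = 1"
  shows "(f^n)$0 = 1" "(f^n)$1 = of_nat n * f$1"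
proof -
  have m1: "(a * b) $ 1 = a$0 * b$1 + a$1 * b$0" for a b :: "'a fps"
    by (simp add: fps_mult_nth numeral_2_eq_2)
  have p0: "(f^m)$0 = 1" for m using assms by (induction m) auto
  show "(f^n)$0 = 1" by (rule p0)
  show "(f^n)$1 = of_nat n * f$1"
  proof (induction n)
    case (Suc n)
    have "(f^Suc n)$1 = f$0 * (f^n)$1 + f$1 * (f^n)$0" by (simp add: m1)
    also have "\<dots> = of_nat (Suc n) * f$1" using Suc assms p0[of n] by (simp add: algebra_simps)
    finally show ?case .
  qed simp
qed

definition zz :: "rat fps" where "zz = 1 + fps_X"
definition ww :: "rat fps" where "ww = inverse zz"

lemma zz0: "zz$0 = 1" and zz1: "zz$1 = 1" by (simp_all add: zz_def)
lemma zw: "zz * ww = 1" unfolding ww_def by (rule inverse_mult_eq_1') (simp add: zz0)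
lemma ww0: "ww$0 = 1" and ww1: "ww$1 = -1"
proof -
  have "(zz * ww)$0 = 1" "(zz * ww)$1 = 0" using zw by simp_all
  hence a: "zz$0 * ww$0 = 1" "zz$0 * ww$1 + zz$1 * ww$0 = 0"
    by (simp_all add: fps_mult_nth numeral_2_eq_2)
  show "ww$0 = 1" using a(1) zz0 by simp
  thus "ww$1 = -1" using a(2) zz0 zz1 by simp
qed

lemma zp_nth0: "zp zz ww k $ 0 = 1"
  by (simp add: zp_def pow_nth01 zz0 ww0)

lemma zp_nth1: "zp zz ww k $ 1 = of_int k"
proof -
  have a: "(zz^n) $ 1 = of_nat n" for n using pow_nth01(2)[OF zz0, of n] zz1 by simp
  have b: "(ww^n) $ 1 = - of_nat n" for n using pow_nth01(2)[OF ww0, of n] ww1 by simp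
  show ?thesis by (cases "k \<ge> 0") (simp_all add: zp_def a b del: One_nat_def)
qed

lemma m1pow: "(-1 :: 'a::comm_ring_1 fps)^n = fps_const ((-1)^n)"
  by (induction n) (auto simp: fps_const_neg[symmetric] simp del: fps_const_neg)

lemma sgc: "(zp (-1) (-1) k :: 'a::comm_ring_1 fps) = fps_const (zp (-1) (-1) k)"
  by (simp add: zp_def m1pow)


abbreviation "AA \<equiv> Pinf (fps_X::rat fps) fps_X"
abbreviation "CC \<equiv> Pinf (fps_X::rat fps) (fps_X^2)"
abbreviation "BB \<equiv> Pinf (fps_X^2::rat fps) (fps_X^2)"
definition Mser :: "rat fps" where "Mser = msum UNIV (\<lambda>p. of_int (6*p - 1)) (\<lambda>p. nat (pent p))"

lemma msum_zero: "msum A (\<lambda>x. 0) e = 0" by (simp add: msum_def fps_eq_iff)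

lemma prod2: "(\<Prod>rr<(2::nat). f rr) = f 0 * (f 1 :: 'a::comm_monoid_mult)"
  by (simp add: numeral_2_eq_2)
lemma prod3: "(\<Prod>rr<(3::nat). f rr) = f 0 * f 1 * (f 2 :: 'a::comm_monoid_mult)"
  by (simp add: numeral_3_eq_3 numeral_2_eq_2 mult_ac)

lemma split2: "AA = CC * BB"
proof -
  have "AA = (\<Prod>rr<2. Pinf (fps_X * fps_X^rr) (fps_X^2))" by (rule Pinf_split) auto
  moreover have "fps_X * fps_X = (fps_X^2 :: rat fps)" by (simp add: power2_eq_square)
  ultimately show ?thesis unfolding prod2 by simp
qed

lemma split3: "BB = Pinf (fps_X^2) (fps_X^6) * Pinf (fps_X^4) (fps_X^6) * Pinf (fps_X^6) (fps_X^6)"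
proof -
  have "BB = (\<Prod>rr<3. Pinf (fps_X^2 * (fps_X^2)^rr) ((fps_X^2)^3))" by (rule Pinf_split) auto
  thus ?thesis unfolding prod3 power_mult[symmetric] Xmono3 by simp
qed

lemma E2rat: "msum UNIV (zp (-1) (-1)) (Ej 2 4) = BB"
proof -
  have "Pinf (fps_const (1::rat) * fps_X^2) (fps_X^(2+4)) * Pinf (fps_const 1 * fps_X^4) (fps_X^(2+4))
          * Pinf (fps_X^(2+4)) (fps_X^(2+4)) = msum UNIV (zp (-1) (-1)) (Ej 2 4)"
    by (rule jtp) auto
  thus ?thesis using split3 by simp
qed


instance fps :: (ring_char_0) ring_char_0 ..

abbreviation "XS \<equiv> (fps_X :: rat fps fps)"

lemma J1: "Pinf (fps_const zz) XS * Pinf (fps_const ww * XS) XS * Pinf XS XS = msum UNIV (zp (-zz) (-ww)) (Ej 0 1)"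
  using jtp[OF zw, of 0 1] by simp

lemma zw2: "zz^2 * ww^2 = 1" using zw by (simp add: power_mult_distrib[symmetric])

lemma J2: "Pinf (fps_const (zz^2) * XS) (XS^2) * Pinf (fps_const (ww^2) * XS) (XS^2) * Pinf (XS^2) (XS^2)
    = msum UNIV (zp (-(zz^2)) (-(ww^2))) (Ej 1 1)"
  using jtp[OF zw2, of 1 1] by (simp add: numeral_2_eq_2)

lemma zp_nth1s: "zp zz ww k $ Suc 0 = of_int k" using zp_nth1[of k] by simp

lemma h0X: "hj 0 (fps_const c * XS) = fps_const (c$0) * fps_X" by simp

lemma key: "Mser = - (AA^3 * CC^2)"
proof -
  define E2S :: "rat fps fps" where "E2S = msum UNIV (zp (-1) (-1)) (Ej 2 4)"
  define QS :: "rat fps fps" where "QS = msum UNIV (\<lambda>p. zp zz ww (3*p) - zp zz ww (1-3*p)) (\<lambda>p. nat (pent p))"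
  define Y where "Y = Pinf (fps_const zz * XS) XS * Pinf (fps_const ww * XS) XS * Pinf XS XS"
  define J2P where "J2P = Pinf (fps_const (zz^2) * XS) (XS^2) * Pinf (fps_const (ww^2) * XS) (XS^2) * Pinf (XS^2) (XS^2)"
  have J1P: "Pinf (fps_const zz) XS * Pinf (fps_const ww * XS) XS * Pinf XS XS = (1 - fps_const zz) * Y"
    unfolding Y_def by (subst Pinf_peel) (simp_all add: mult_ac)
  have eq: "((1 - fps_const zz) * Y) * J2P = E2S * QS"
    unfolding J1P[symmetric] J2P_def J1 J2 E2S_def QS_def by (rule lattice[OF zw])
  have "hj 1 (((1 - fps_const zz) * Y) * J2P) = hj 1 (E2S * QS)" using eq by simp
  moreover have "hj 1 (((1 - fps_const zz) * Y) * J2P) = - (AA * AA * AA) * (CC * CC * BB)"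
  proof -
    have zs: "zz $ Suc 0 = 1" by (simp add: zz_def)
    have a: "hj 0 (1 - fps_const zz) = 0" "hj 1 (1 - fps_const zz) = -1" by (simp_all add: zz0 zs)
    have hY: "hj 0 Y = AA * AA * AA"
      unfolding Y_def by (simp add: h0_Pinf zz0 ww0)
    have hJ: "hj 0 J2P = CC * CC * BB"
      unfolding J2P_def by (simp add: h0_Pinf pow_nth01 zz0 ww0)
    show ?thesis unfolding h1_mult[of "(1 - fps_const zz) * Y" J2P] h1_mult[of "1 - fps_const zz" Y] h0_mult a hY hJ
      by simp
  qed
  moreover have "hj 1 (E2S * QS) = BB * Mser"
  proof -
    have "hj 1 E2S = 0" unfolding E2S_def hj_msum by (simp add: sgc msum_zero)
    moreover have "hj 0 E2S = BB" unfolding E2S_def hj_msum by (simp add: sgc E2rat)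
    moreover have "hj 1 QS = Mser" unfolding QS_def hj_msum Mser_def
      by (rule msum_cong) (simp_all add: zp_nth1s)
    ultimately show ?thesis unfolding h1_mult[of E2S QS] by simp
  qed
  ultimately have "BB * Mser = BB * (- (AA^3 * CC^2))" by (simp add: power2_eq_square power3_eq_cube mult_ac)
  moreover have "BB \<noteq> 0"
  proof -
    have "BB $ 0 = 1" by (rule Pinf_0') simp
    thus ?thesis by auto
  qed
  ultimately show ?thesis by (metis mult_left_cancel)
qed


lemma qpoch_Pinf:
  fixes a q :: "'a::field fps"
  assumes q: "q$0 = 0"
  shows "qpoch_inf a q = Pinf a q"
proof -
  have "(\<lambda>N. pp a q N) \<longlonglongrightarrow> Pinf a q"
  proof (rule tendsto_fpsI)
    fix n
    show "eventually (\<lambda>N. pp a q N $ n = Pinf a q $ n) sequentially"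
      unfolding eventually_sequentially
    proof (rule exI[of _ "Suc n"], intro allI impI)
      fix N assume "Suc n \<le> N"
      hence "agree n (pp a q N) (Pinf a q)" by (intro Pinf_agree[OF q]) simp
      thus "pp a q N $ n = Pinf a q $ n" by (simp add: agree_def)
    qed
  qed
  hence "lim (\<lambda>N. pp a q N) = Pinf a q" by (rule limI)
  thus ?thesis by (simp add: qpoch_inf_def pp_def)
qed

lemma AA0: "AA $ 0 = 1" by (rule Pinf_0') simp
lemma CC0: "CC $ 0 = 1" by (rule Pinf_0) simp_all
lemma BB0: "BB $ 0 = 1" by (rule Pinf_0') simp

lemma rgf_prod: "r_gf * (AA^3 * CC^2) = 1"
proof -
  have "qpoch_inf (fps_X^2) (fps_X^2) = BB" "qpoch_inf fps_X fps_X = AA"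
    by (simp_all add: qpoch_Pinf)
  hence rg: "r_gf = BB^2 / AA^5" by (simp add: r_gf_def)
  have A5: "(AA^5) $ 0 \<noteq> 0" by (simp add: fps_nth_power_0 AA0)
  have "r_gf * AA^5 = BB^2"
    unfolding rg fps_divide_unit[OF A5] using inverse_mult_eq_1[OF A5] by (simp add: mult.assoc)
  hence "r_gf * (AA^3 * CC^2) * AA^2 = BB^2 * CC^2"
    by (simp add: power_add[symmetric] mult_ac)
  also have "\<dots> = 1 * AA^2" by (simp add: split2 power_mult_distrib mult_ac)
  finally have "r_gf * (AA^3 * CC^2) * AA^2 = 1 * AA^2" .
  moreover have "AA^2 \<noteq> 0" using AA0 by auto
  ultimately show ?thesis by (metis mult_right_cancel)
qed

lemma pent0: "nat (pent p) = 0 \<longleftrightarrow> p = 0"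
proof
  assume "nat (pent p) = 0"
  hence "pent p \<le> 0" by simp
  thus "p = 0" using pent_ge[of p] by simp
qed (simp add: pent_def)

lemma Mser0: "Mser $ 0 = -1"
proof -
  have "{p. nat (pent p) = 0} = {0::int}" using pent0 by auto
  thus ?thesis by (simp add: Mser_def msum_nth)
qed

lemma r_rec: "r n = (if n = 0 then 1 else 0) + (\<Sum>i<n. r i * Mser $ (n - i))"
proof -
  have "r_gf * (- Mser) = 1" unfolding key using rgf_prod by simp
  hence "(if n = 0 then 1 else 0) = (r_gf * (- Mser)) $ n" by simp
  also have "\<dots> = (\<Sum>i=0..n. r_gf$i * (- Mser)$(n-i))" by (rule fps_mult_nth)
  also have "\<dots> = (\<Sum>i<Suc n. r_gf$i * (- Mser)$(n-i))" by (simp add: atLeast0AtMost lessThan_Suc_atMost)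
  also have "\<dots> = (\<Sum>i<n. r_gf$i * (- Mser)$(n-i)) + r_gf$n * (- Mser)$0" by simp
  also have "\<dots> = r n - (\<Sum>i<n. r i * Mser $ (n - i))" by (simp add: Mser0 r_def sum_negf)
  finally show ?thesis by (simp add: algebra_simps)
qed


definition JJ :: "nat list \<Rightarrow> int set" where "JJ c = {j::int. j \<noteq> 0 \<and> nat (pent j) \<in> set c}"
definition wt :: "nat list \<Rightarrow> int" where
  "wt c = (\<Prod>j\<in>JJ c. (6 * j - 1) ^ count_list c (nat (pent j)))"
definition Vi :: "nat \<Rightarrow> int" where "Vi k = (\<Sum>p\<in>{p. nat (pent p) = k}. 6 * p - 1)"
definition Cm :: "nat \<Rightarrow> int" where "Cm n = (\<Sum>c\<in>compositions P5 n. wt c)"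

lemma pent_inj: "nat (pent j) = nat (pent j') \<Longrightarrow> j = j'"
proof -
  assume a: "nat (pent j) = nat (pent j')"
  have "0 \<le> pent j" "0 \<le> pent j'" using pent_ge[of j] pent_ge[of j'] by (auto intro: order_trans[OF abs_ge_zero])
  hence "pent j = pent j'" using a by simp
  hence "j * (3 * j - 1) = j' * (3 * j' - 1)" using pent_int[of j] pent_int[of j'] by simp
  hence "(j - j') * (3 * j + 3 * j' - 1) = 0" by (simp add: algebra_simps)
  moreover have "3 * j + 3 * j' - 1 \<noteq> 0" by presburger
  ultimately show "j = j'" by simp
qed

lemma fin_fib: "finite {p. nat (pent p) = k}"
  using ffib_pent[of UNIV] by (simp add: ffib_def)

lemma JJ_fin: "finite (JJ c)"
proof -
  have "JJ c \<subseteq> (\<Union>x\<in>set c. {p. nat (pent p) = x})" by (auto simp: JJ_def)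
  moreover have "finite (\<Union>x\<in>set c. {p. nat (pent p) = x})" using fin_fib by auto
  ultimately show ?thesis by (rule finite_subset)
qed

lemma Vi_P5:
  assumes "k = nat (pent j0)"
  shows "Vi k = 6 * j0 - 1"
proof -
  have "{p. nat (pent p) = k} = {j0}" using assms pent_inj by auto
  thus ?thesis by (simp add: Vi_def)
qed

lemma Vi_notP5: "k \<noteq> 0 \<Longrightarrow> k \<notin> P5 \<Longrightarrow> Vi k = 0"
proof -
  assume k: "k \<noteq> 0" "k \<notin> P5"
  have "{p. nat (pent p) = k} = {}"
  proof (rule ccontr)
    assume "{p. nat (pent p) = k} \<noteq> {}"
    then obtain p where p: "nat (pent p) = k" by auto
    hence "p \<noteq> 0" using k by (auto simp: pent_def)
    hence "k \<in> P5" using p by (auto simp: P5_def)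
    thus False using k by simp
  qed
  thus ?thesis by (simp add: Vi_def)
qed

lemma wt_cons:
  assumes "k \<in> P5"
  shows "wt (k # c) = Vi k * wt c"
proof -
  obtain j0 where j0: "j0 \<noteq> 0" "k = nat (pent j0)" using assms by (auto simp: P5_def)
  define f where "f d j = (6 * j - 1) ^ count_list d (nat (pent j))" for d j
  have JJc: "JJ (k # c) = insert j0 (JJ c)" using j0 pent_inj by (auto simp: JJ_def)
  have fo: "f (k # c) j = f c j" if "j \<noteq> j0" for j
  proof -
    have "nat (pent j) \<noteq> k" using that j0 pent_inj by metis
    thus ?thesis by (simp add: f_def)
  qed
  have f0: "f (k # c) j0 = (6 * j0 - 1) * f c j0" using j0 by (simp add: f_def)
  have "wt (k # c) = f (k # c) j0 * (\<Prod>j\<in>JJ c - {j0}. f (k # c) j)"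
    unfolding wt_def f_def[symmetric] JJc by (rule prod.insert_remove[OF JJ_fin])
  also have "(\<Prod>j\<in>JJ c - {j0}. f (k # c) j) = (\<Prod>j\<in>JJ c - {j0}. f c j)"
    using fo by (intro prod.cong) auto
  also have "wt c = f c j0 * (\<Prod>j\<in>JJ c - {j0}. f c j)"
  proof (cases "j0 \<in> JJ c")
    case True
    thus ?thesis unfolding wt_def f_def[symmetric] by (rule prod.remove[OF JJ_fin])
  next
    case False
    hence "k \<notin> set c" using j0 by (auto simp: JJ_def)
    hence "f c j0 = 1" using j0 by (simp add: f_def count_list_0_iff)
    thus ?thesis using False unfolding wt_def f_def[symmetric] by simp
  qed
  ultimately show ?thesis using f0 Vi_P5[OF j0(2)] by (simp add: mult_ac)
qed

lemma Vi_Mser: "of_int (Vi k) = Mser $ k"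
  by (simp add: Vi_def Mser_def msum_nth)


lemma len_le_sum: "(\<forall>x\<in>set xs. 0 < x) \<Longrightarrow> length xs \<le> sum_list (xs::nat list)"
  by (induction xs) auto

lemma mem_le_sum: "x \<in> set xs \<Longrightarrow> x \<le> sum_list (xs::nat list)"
  by (induction xs) auto

lemma comp_fin: "finite (compositions T n)"
proof -
  have "compositions T n \<subseteq> {xs. set xs \<subseteq> {..n} \<and> length xs \<le> n}"
    using len_le_sum mem_le_sum by (fastforce simp: compositions_def)
  moreover have "finite {xs. set xs \<subseteq> {..n} \<and> length xs \<le> n}"
    by (rule finite_lists_length_le) simp
  ultimately show ?thesis by (rule finite_subset)
qed

lemma comp0: "compositions T 0 = {[]}"
proof -
  have "c = []" if "c \<in> compositions T 0" for c
    using that by (cases c) (auto simp: compositions_def)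
  thus ?thesis by (auto simp: compositions_def)
qed

lemma comp_Suc:
  assumes "0 < n"
  shows "compositions P5 n = (\<Union>k\<in>{k\<in>{1..n}. k \<in> P5}. (\<lambda>c. k # c) ` compositions P5 (n - k))"
proof
  show "compositions P5 n \<subseteq> (\<Union>k\<in>{k\<in>{1..n}. k \<in> P5}. (\<lambda>c. k # c) ` compositions P5 (n - k))"
  proof
    fix c assume c: "c \<in> compositions P5 n"
    then obtain k c' where kc: "c = k # c'" using assms by (cases c) (auto simp: compositions_def)
    have "0 < k" "k \<in> P5" "k + sum_list c' = n" "\<forall>x\<in>set c'. 0 < x" "set c' \<subseteq> P5"
      using c kc by (auto simp: compositions_def)
    hence "k \<in> {k\<in>{1..n}. k \<in> P5}" "c' \<in> compositions P5 (n - k)" by (auto simp: compositions_def)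
    thus "c \<in> (\<Union>k\<in>{k\<in>{1..n}. k \<in> P5}. (\<lambda>c. k # c) ` compositions P5 (n - k))" using kc by auto
  qed
  show "(\<Union>k\<in>{k\<in>{1..n}. k \<in> P5}. (\<lambda>c. k # c) ` compositions P5 (n - k)) \<subseteq> compositions P5 n"
    by (auto simp: compositions_def)
qed

lemma Cm_rec: "Cm n = (if n = 0 then 1 else 0) + (\<Sum>i<n. Cm i * Vi (n - i))"
proof (cases "n = 0")
  case True
  thus ?thesis by (simp add: Cm_def comp0 wt_def JJ_def)
next
  case False
  define K where "K = {k\<in>{1..n}. k \<in> P5}"
  have cs: "compositions P5 n = (\<Union>k\<in>K. (\<lambda>c. k # c) ` compositions P5 (n - k))"
    unfolding K_def using comp_Suc False by simp
  have "Cm n = (\<Sum>k\<in>K. \<Sum>c\<in>(\<lambda>c. k # c) ` compositions P5 (n - k). wt c)"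
    unfolding Cm_def cs
    by (subst sum.UNION_disjoint) (auto simp: K_def comp_fin)
  also have "\<dots> = (\<Sum>k\<in>K. \<Sum>c\<in>compositions P5 (n - k). wt (k # c))"
    by (rule sum.cong[OF refl], subst sum.reindex) (auto simp: inj_on_def)
  also have "\<dots> = (\<Sum>k\<in>K. Vi k * Cm (n - k))"
    by (intro sum.cong refl) (auto simp: K_def wt_cons Cm_def sum_distrib_left)
  also have "\<dots> = (\<Sum>k\<in>{1..n}. Vi k * Cm (n - k))"
    by (rule sum.mono_neutral_left) (auto simp: K_def Vi_notP5)
  also have "\<dots> = (\<Sum>i<n. Cm i * Vi (n - i))"
    by (rule sum.reindex_bij_witness[of _ "\<lambda>i. n - i" "\<lambda>k. n - k"]) (auto simp: mult.commute)
  finally show ?thesis using False by simp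
qed

lemma r_Cm: "r n = of_int (Cm n)"
proof (induction n rule: less_induct)
  case (less n)
  have "r n = (if n = 0 then 1 else 0) + (\<Sum>i<n. r i * Mser $ (n - i))" by (rule r_rec)
  also have "\<dots> = (if n = 0 then 1 else 0) + (\<Sum>i<n. of_int (Cm i) * of_int (Vi (n - i)))"
    using less by (simp add: Vi_Mser)
  also have "\<dots> = of_int (Cm n)" by (subst Cm_rec) simp
  finally show ?case .
qed

theorem mainTheorem14:
  fixes n :: nat
  shows "r n = of_int (\<Sum>c\<in>compositions P5 n.
            \<Prod>j\<in>{j::int. j \<noteq> 0 \<and> nat (pent j) \<in> set c}.
               (6 * j - 1) ^ count_list c (nat (pent j)))"
  using r_Cm[of n] by (simp add: Cm_def wt_def JJ_def)


end
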